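(* Assume (C1), (C2), (PQM) and (G). Let $(\overline\Phi,\underline\Phi)$ be a pair of upper and lower solutions of the wave system (W) with $0\le\underline\Phi(t)\le\overline\Phi(t)\le(M_1,M_2,M_3)$ for all $t\in\mathbb R$, let $\Gamma=\{\Phi\in C(\mathbb R,\mathbb R^3):\underline\Phi\le\Phi\le\overline\Phi\}$, and let $0<\mu<\min\{\delta_1,\delta_2,\delta_3\}$. Then: (i) $F(\Gamma)\subset\Gamma$; more precisely, for every $\Phi\in\Gamma$, $\underline\phi\le F_1(\underline\phi,\underline\varphi,\underline\psi)\le F_1(\Phi)\le F_1(\overline\phi,\overline\varphi,\overline\psi)\le\overline\phi$, $\underline\varphi\le F_2(\overline\phi,\underline\varphi,\overline\psi)\le F_2(\Phi)\le F_2(\underline\phi,\overline\varphi,\underline\psi)\le\overline\varphi$, $\underline\psi\le F_3(\underline\phi,\underline\varphi,\underline\psi)\le F_3(\Phi)\le F_3(\overline\phi,\overline\varphi,\overline\psi)\le\overline\psi$; (ii) $F:\Gamma\to B_\mu(\mathbb R,\mathbb R^3)$ is continuous with respect to $|\cdot|_\mu$; (iii) $F:\Gamma\to\Gamma$ is compact, i.e. $F(\Gamma)$ is relatively compact in $(B_\mu(\mathbb R,\mathbb R^3),|\cdot|_\mu)$.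
   Context: Fix $\sigma>0$, $c>0$, $D_1,D_2,D_3>0$, real numbers $r_1,r_2,r_3$, and constants $k_i>0$, $M_i\ge k_i$ ($i=1,2,3$). Let $X=C([-\sigma,0],\mathbb R)$ with the sup norm. For $\Phi=(\phi,\varphi,\psi)\in C(\mathbb R,\mathbb R^3)$ and $s\in\mathbb R$ the history segment is $\Phi_s=(\phi_s,\varphi_s,\psi_s)\in X^3$, $\phi_s(\theta)=\phi(s+\theta)$ for $\theta\in[-\sigma,0]$. For a constant $a$, $\hat a$ is the constant function with value $a$. Functions $f_{1c},f_{2c},f_{3c}:X^3\to\mathbb R$ are given. A triple $(\chi_1,\chi_2,\chi_3)\in X^3$ is admissible if $0\le\chi_j\le M_j$ on $[-\sigma,0]$, $j=1,2,3$. Inequalities between functions are pointwise and componentwise. Wave system (W): $D_1\phi''(t)-c\phi'(t+r_1)+f_{1c}(\Phi_{t+r_1})=0$, $D_2\varphi''(t)-c\varphi'(t+r_2)+f_{2c}(\Phi_{t+r_2})=0$, $D_3\psi''(t)-c\psi'(t+r_3)+f_{3c}(\Phi_{t+r_3})=0$, $t\in\mathbb R$. (C1): $f_{ic}(\hat0,\hat0,\hat0)=f_{ic}(\hat k_1,\hat k_2,\hat k_3)=0$, $i=1,2,3$. (C2): there are $L_1,L_2,L_3>0$ with $|f_{ic}(\Phi)-f_{ic}(\Psi)|\le L_i\|\Phi-\Psi\|$ for all admissible $\Phi,\Psi\in X^3$ ($\|\cdot\|$ the max of the sup norms of the components). (PQM): there are $\beta_1,\beta_2,\beta_3>0$ such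 that for all admissible $(\phi_1,\varphi_1,\psi_1),(\phi_2,\varphi_2,\psi_2)$ with $\phi_2\le\phi_1,\varphi_2\le\varphi_1,\psi_2\le\psi_1$: (P1) $f_{1c}(\phi_1,\varphi_1,\psi_1)-f_{1c}(\phi_2,\varphi_2,\psi_2)+\beta_1[\phi_1(0)-\phi_2(0)]\ge0$; (P2) $f_{2c}(\phi_1,\varphi_1,\psi_1)-f_{2c}(\phi_1,\varphi_2,\psi_1)+\beta_2[\varphi_1(0)-\varphi_2(0)]\ge0$; (P3) $f_{2c}(\phi_1,\varphi_1,\psi_1)\le f_{2c}(\phi_2,\varphi_1,\psi_1)$; (P4) $f_{2c}(\phi_1,\varphi_1,\psi_1)\le f_{2c}(\phi_1,\varphi_1,\psi_2)$; (P5) $f_{3c}(\phi_1,\varphi_1,\psi_1)-f_{3c}(\phi_2,\varphi_2,\psi_2)+\beta_3[\psi_1(0)-\psi_2(0)]\ge0$. $H_i(\Phi)(t)=f_{ic}(\Phi_{t+r_i})+\beta_i\Phi_{(i)}(t+r_i)$ where $\Phi_{(1)}=\phi,\Phi_{(2)}=\varphi,\Phi_{(3)}=\psi$. (G): for each $i$ there is a continuous kernel $G_i:\mathbb R\to[0,\infty)$ with $G_i(\xi)\le K_ie^{-\delta_i|\xi|}$ ($K_i,\delta_i>0$) such that for every bounded continuous $h$, $x=G_i*h$ is the unique bounded solution of $D_ix''(t)-cx'(t+r_i)-\beta_ix(t+r_i)+h(t)=0$. $F_i(\Phi)(t)=\int_{-\infty}^\infty G_i(t-s)H_i(\Phi)(s)ds$,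 $F=(F_1,F_2,F_3)$. Upper/lower solutions: a pair $\overline\Phi=(\overline\phi,\overline\varphi,\overline\psi)$, $\underline\Phi=(\underline\phi,\underline\varphi,\underline\psi)\in C^2(\mathbb R,\mathbb R^3)$, with all components and their first and second derivatives bounded, such that for all $t$: $D_1\overline\phi''(t)-c\overline\phi'(t+r_1)+f_{1c}(\overline\phi_{t+r_1},\overline\varphi_{t+r_1},\overline\psi_{t+r_1})\le0$, $D_2\overline\varphi''(t)-c\overline\varphi'(t+r_2)+f_{2c}(\underline\phi_{t+r_2},\overline\varphi_{t+r_2},\underline\psi_{t+r_2})\le0$, $D_3\overline\psi''(t)-c\overline\psi'(t+r_3)+f_{3c}(\overline\phi_{t+r_3},\overline\varphi_{t+r_3},\overline\psi_{t+r_3})\le0$, $D_1\underline\phi''(t)-c\underline\phi'(t+r_1)+f_{1c}(\underline\phi_{t+r_1},\underline\varphi_{t+r_1},\underline\psi_{t+r_1})\ge0$, $D_2\underline\varphi''(t)-c\underline\varphi'(t+r_2)+f_{2c}(\overline\phi_{t+r_2},\underline\varphi_{t+r_2},\overline\psi_{t+r_2})\ge0$, $D_3\underline\psi''(t)-c\underline\psi'(t+r_3)+f_{3c}(\underline\phi_{t+r_3},\underline\varphi_{t+r_3},\underline\psi_{t+r_3})\ge0$. $B_\mu(\mathbb R,\mathbb R^3)=\{\Phi\in C(\mathbb R,\mathbb R^3):|\Phi|_\mu<\infty\}$, $|\Phi|_\mu=\sup_{t}e^{-\mu|t|}|\Phi(t)|$. *)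

theory Defs
  imports "HOL-Analysis.Analysis"
begin

text \<open>Triples of real functions, used both for elements of C(R,R^3) and of X^3.\<close>
type_synonym tri = "(real \<Rightarrow> real) \<times> (real \<Rightarrow> real) \<times> (real \<Rightarrow> real)"

definition comp :: "nat \<Rightarrow> tri \<Rightarrow> real \<Rightarrow> real" where
  "comp i \<Phi> = (if i = 1 then fst \<Phi> else if i = 2 then fst (snd \<Phi>) else snd (snd \<Phi>))"

text \<open>Elements of X = C([-sigma,0]) are represented canonically: continuous on [-sigma,0], zero outside.\<close>
definition inX :: "real \<Rightarrow> (real \<Rightarrow> real) \<Rightarrow> bool" where
  "inX \<sigma> \<phi> \<longleftrightarrow> continuous_on {-\<sigma>..0} \<phi> \<and> (\<forall>\<theta>. \<theta> \<notin> {-\<sigma>..0} \<longrightarrow> \<phi> \<theta> = 0)"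

definition seg :: "real \<Rightarrow> (real \<Rightarrow> real) \<Rightarrow> real \<Rightarrow> (real \<Rightarrow> real)" where
  "seg \<sigma> \<phi> s = (\<lambda>\<theta>. if -\<sigma> \<le> \<theta> \<and> \<theta> \<le> 0 then \<phi> (s + \<theta>) else 0)"

definition seg3 :: "real \<Rightarrow> tri \<Rightarrow> real \<Rightarrow> tri" where
  "seg3 \<sigma> \<Phi> s = (seg \<sigma> (fst \<Phi>) s, seg \<sigma> (fst (snd \<Phi>)) s, seg \<sigma> (snd (snd \<Phi>)) s)"

definition hat :: "real \<Rightarrow> real \<Rightarrow> (real \<Rightarrow> real)" where
  "hat \<sigma> a = (\<lambda>\<theta>. if -\<sigma> \<le> \<theta> \<and> \<theta> \<le> 0 then a else 0)"

definition xnorm :: "real \<Rightarrow> (real \<Rightarrow> real) \<Rightarrow> real" where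
  "xnorm \<sigma> \<phi> = (SUP \<theta>\<in>{-\<sigma>..0}. \<bar>\<phi> \<theta>\<bar>)"

definition diff3 :: "tri \<Rightarrow> tri \<Rightarrow> tri" where
  "diff3 \<Phi> \<Psi> = (\<lambda>t. fst \<Phi> t - fst \<Psi> t,
                  \<lambda>t. fst (snd \<Phi>) t - fst (snd \<Psi>) t,
                  \<lambda>t. snd (snd \<Phi>) t - snd (snd \<Psi>) t)"

definition xnorm3 :: "real \<Rightarrow> tri \<Rightarrow> real" where
  "xnorm3 \<sigma> \<Phi> = max (xnorm \<sigma> (fst \<Phi>)) (max (xnorm \<sigma> (fst (snd \<Phi>))) (xnorm \<sigma> (snd (snd \<Phi>))))"

definition admissible :: "real \<Rightarrow> (nat \<Rightarrow> real) \<Rightarrow> tri \<Rightarrow> bool" where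
  "admissible \<sigma> M \<Phi> \<longleftrightarrow> (\<forall>i\<in>{1,2,3}. inX \<sigma> (comp i \<Phi>) \<and>
      (\<forall>\<theta>\<in>{-\<sigma>..0}. 0 \<le> comp i \<Phi> \<theta> \<and> comp i \<Phi> \<theta> \<le> M i))"

definition leX3 :: "real \<Rightarrow> tri \<Rightarrow> tri \<Rightarrow> bool" where
  "leX3 \<sigma> \<Phi> \<Psi> \<longleftrightarrow> (\<forall>i\<in>{1,2,3}. \<forall>\<theta>\<in>{-\<sigma>..0}. comp i \<Phi> \<theta> \<le> comp i \<Psi> \<theta>)"

definition C1 :: "real \<Rightarrow> (nat \<Rightarrow> real) \<Rightarrow> (nat \<Rightarrow> tri \<Rightarrow> real) \<Rightarrow> bool" where
  "C1 \<sigma> k f \<longleftrightarrow> (\<forall>i\<in>{1,2,3}. f i (hat \<sigma> 0, hat \<sigma> 0, hat \<sigma> 0) = 0 \<and>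
                                 f i (hat \<sigma> (k 1), hat \<sigma> (k 2), hat \<sigma> (k 3)) = 0)"

definition C2 :: "real \<Rightarrow> (nat \<Rightarrow> real) \<Rightarrow> (nat \<Rightarrow> tri \<Rightarrow> real) \<Rightarrow> (nat \<Rightarrow> real) \<Rightarrow> bool" where
  "C2 \<sigma> M f L \<longleftrightarrow> (\<forall>i\<in>{1,2,3}. L i > 0 \<and>
     (\<forall>\<Phi> \<Psi>. admissible \<sigma> M \<Phi> \<and> admissible \<sigma> M \<Psi> \<longrightarrow>
        \<bar>f i \<Phi> - f i \<Psi>\<bar> \<le> L i * xnorm3 \<sigma> (diff3 \<Phi> \<Psi>)))"

definition PQM :: "real \<Rightarrow> (nat \<Rightarrow> real) \<Rightarrow> (nat \<Rightarrow> tri \<Rightarrow> real) \<Rightarrow> (nat \<Rightarrow> real) \<Rightarrow> bool" where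
  "PQM \<sigma> M f \<beta> \<longleftrightarrow> (\<forall>i\<in>{1,2,3}. \<beta> i > 0) \<and>
    (\<forall>a1 b1 c1 a2 b2 c2. admissible \<sigma> M (a1, b1, c1) \<and> admissible \<sigma> M (a2, b2, c2) \<and>
        leX3 \<sigma> (a2, b2, c2) (a1, b1, c1) \<longrightarrow>
       f 1 (a1, b1, c1) - f 1 (a2, b2, c2) + \<beta> 1 * (a1 0 - a2 0) \<ge> 0 \<and>
       f 2 (a1, b1, c1) - f 2 (a1, b2, c1) + \<beta> 2 * (b1 0 - b2 0) \<ge> 0 \<and>
       f 2 (a1, b1, c1) \<le> f 2 (a2, b1, c1) \<and>
       f 2 (a1, b1, c1) \<le> f 2 (a1, b1, c2) \<and>
       f 3 (a1, b1, c1) - f 3 (a2, b2, c2) + \<beta> 3 * (c1 0 - c2 0) \<ge> 0)"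

definition is_sol :: "real \<Rightarrow> real \<Rightarrow> real \<Rightarrow> real \<Rightarrow> (real \<Rightarrow> real) \<Rightarrow> (real \<Rightarrow> real) \<Rightarrow> bool" where
  "is_sol D c r \<beta> h x \<longleftrightarrow> (\<forall>t. x differentiable at t) \<and> (\<forall>t. deriv x differentiable at t) \<and>
     (\<forall>t. D * deriv (deriv x) t - c * deriv x (t + r) - \<beta> * x (t + r) + h t = 0)"

definition conv :: "(real \<Rightarrow> real) \<Rightarrow> (real \<Rightarrow> real) \<Rightarrow> real \<Rightarrow> real" where
  "conv G h = (\<lambda>t. integral UNIV (\<lambda>s. G (t - s) * h s))"

definition Gcond :: "(nat \<Rightarrow> real) \<Rightarrow> real \<Rightarrow> (nat \<Rightarrow> real) \<Rightarrow> (nat \<Rightarrow> real) \<Rightarrow>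
    (nat \<Rightarrow> real \<Rightarrow> real) \<Rightarrow> (nat \<Rightarrow> real) \<Rightarrow> (nat \<Rightarrow> real) \<Rightarrow> bool" where
  "Gcond D c r \<beta> G K \<delta> \<longleftrightarrow> (\<forall>i\<in>{1,2,3}. K i > 0 \<and> \<delta> i > 0 \<and> continuous_on UNIV (G i) \<and>
     (\<forall>\<xi>. 0 \<le> G i \<xi> \<and> G i \<xi> \<le> K i * exp (- \<delta> i * \<bar>\<xi>\<bar>)) \<and>
     (\<forall>h. continuous_on UNIV h \<and> bounded (range h) \<longrightarrow>
        bounded (range (conv (G i) h)) \<and> is_sol (D i) c (r i) (\<beta> i) h (conv (G i) h) \<and>
        (\<forall>y. bounded (range y) \<and> is_sol (D i) c (r i) (\<beta> i) h y \<longrightarrow> y = conv (G i) h)))"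

definition H :: "real \<Rightarrow> (nat \<Rightarrow> tri \<Rightarrow> real) \<Rightarrow> (nat \<Rightarrow> real) \<Rightarrow> (nat \<Rightarrow> real) \<Rightarrow> nat \<Rightarrow> tri \<Rightarrow> real \<Rightarrow> real" where
  "H \<sigma> f \<beta> r i \<Phi> t = f i (seg3 \<sigma> \<Phi> (t + r i)) + \<beta> i * comp i \<Phi> (t + r i)"

definition Fop :: "real \<Rightarrow> (nat \<Rightarrow> tri \<Rightarrow> real) \<Rightarrow> (nat \<Rightarrow> real) \<Rightarrow> (nat \<Rightarrow> real) \<Rightarrow>
    (nat \<Rightarrow> real \<Rightarrow> real) \<Rightarrow> nat \<Rightarrow> tri \<Rightarrow> real \<Rightarrow> real" where
  "Fop \<sigma> f \<beta> r G i \<Phi> = conv (G i) (H \<sigma> f \<beta> r i \<Phi>)"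

definition F3 :: "real \<Rightarrow> (nat \<Rightarrow> tri \<Rightarrow> real) \<Rightarrow> (nat \<Rightarrow> real) \<Rightarrow> (nat \<Rightarrow> real) \<Rightarrow>
    (nat \<Rightarrow> real \<Rightarrow> real) \<Rightarrow> tri \<Rightarrow> tri" where
  "F3 \<sigma> f \<beta> r G \<Phi> = (Fop \<sigma> f \<beta> r G 1 \<Phi>, Fop \<sigma> f \<beta> r G 2 \<Phi>, Fop \<sigma> f \<beta> r G 3 \<Phi>)"

definition C2b :: "(real \<Rightarrow> real) \<Rightarrow> bool" where
  "C2b \<phi> \<longleftrightarrow> (\<forall>t. \<phi> differentiable at t) \<and> (\<forall>t. deriv \<phi> differentiable at t) \<and>
     continuous_on UNIV (deriv (deriv \<phi>)) \<and>
     bounded (range \<phi>) \<and> bounded (range (deriv \<phi>)) \<and> bounded (range (deriv (deriv \<phi>)))"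

definition Wop :: "real \<Rightarrow> (nat \<Rightarrow> real) \<Rightarrow> real \<Rightarrow> (nat \<Rightarrow> real) \<Rightarrow> (nat \<Rightarrow> tri \<Rightarrow> real) \<Rightarrow>
    nat \<Rightarrow> (real \<Rightarrow> real) \<Rightarrow> tri \<Rightarrow> real \<Rightarrow> real" where
  "Wop \<sigma> D c r f i \<phi> \<Psi> t = D i * deriv (deriv \<phi>) t - c * deriv \<phi> (t + r i) + f i (seg3 \<sigma> \<Psi> (t + r i))"

definition upper_lower :: "real \<Rightarrow> (nat \<Rightarrow> real) \<Rightarrow> real \<Rightarrow> (nat \<Rightarrow> real) \<Rightarrow> (nat \<Rightarrow> tri \<Rightarrow> real) \<Rightarrow>
    tri \<Rightarrow> tri \<Rightarrow> bool" where
  "upper_lower \<sigma> D c r f up lo \<longleftrightarrow>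
     (\<forall>i\<in>{1,2,3}. C2b (comp i up) \<and> C2b (comp i lo)) \<and>
     (\<forall>t. Wop \<sigma> D c r f 1 (fst up) (fst up, fst (snd up), snd (snd up)) t \<le> 0 \<and>
          Wop \<sigma> D c r f 2 (fst (snd up)) (fst lo, fst (snd up), snd (snd lo)) t \<le> 0 \<and>
          Wop \<sigma> D c r f 3 (snd (snd up)) (fst up, fst (snd up), snd (snd up)) t \<le> 0 \<and>
          Wop \<sigma> D c r f 1 (fst lo) (fst lo, fst (snd lo), snd (snd lo)) t \<ge> 0 \<and>
          Wop \<sigma> D c r f 2 (fst (snd lo)) (fst up, fst (snd lo), snd (snd up)) t \<ge> 0 \<and>
          Wop \<sigma> D c r f 3 (snd (snd lo)) (fst lo, fst (snd lo), snd (snd lo)) t \<ge> 0)"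

definition Gamma :: "tri \<Rightarrow> tri \<Rightarrow> tri set" where
  "Gamma lo up = {\<Phi>. \<forall>i\<in>{1,2,3}. continuous_on UNIV (comp i \<Phi>) \<and>
                     (\<forall>t. comp i lo t \<le> comp i \<Phi> t \<and> comp i \<Phi> t \<le> comp i up t)}"

definition wnorm :: "real \<Rightarrow> tri \<Rightarrow> real" where
  "wnorm \<mu> \<Phi> = (SUP t. exp (- \<mu> * \<bar>t\<bar>) * max \<bar>fst \<Phi> t\<bar> (max \<bar>fst (snd \<Phi>) t\<bar> \<bar>snd (snd \<Phi>) t\<bar>))"

definition Bmu :: "real \<Rightarrow> tri set" where
  "Bmu \<mu> = {\<Phi>. (\<forall>i\<in>{1,2,3}. continuous_on UNIV (comp i \<Phi>)) \<and>
     bdd_above (range (\<lambda>t. exp (- \<mu> * \<bar>t\<bar>) * max \<bar>fst \<Phi> t\<bar> (max \<bar>fst (snd \<Phi>) t\<bar> \<bar>snd (snd \<Phi>) t\<bar>)))}"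

end

theory Submission
  imports Defs "HOL-Complex_Analysis.Great_Picard"
begin
lemma exp_half_has_integral:
  assumes a: "a > 0"
  shows "((\<lambda>x::real. exp (- a * \<bar>x\<bar>)) has_integral 1/a) {0..}"
proof -
  have "((\<lambda>x::real. exp (- a * x)) has_integral exp (-a*0)/a) {0..}"
    using has_integral_exp_minus_to_infinity[OF a] .
  then show ?thesis
    by (subst has_integral_cong[where g="\<lambda>x. exp(-a*x)"]) auto
qed

lemma exp_abs_has_integral:
  assumes a: "a > 0"
  shows "((\<lambda>x::real. exp (- a * \<bar>x\<bar>)) has_integral 2/a) UNIV"
proof -
  let ?f = "\<lambda>x::real. exp (- a * \<bar>x\<bar>)"
  have h1: "(?f has_integral 1/a) {0..}" using exp_half_has_integral[OF a] .
  have ab1: "?f absolutely_integrable_on {0..} \<and> integral {0..} ?f = 1/a"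
    using h1 by (auto intro: nonnegative_absolutely_integrable_1 simp: has_integral_iff)
  have "(\<lambda>x. ?f (-x)) absolutely_integrable_on {..0} \<and> integral {..0} (\<lambda>x. ?f (-x)) = 1/a"
    by (rule has_absolute_integral_reflect_real[THEN iffD2]) (use ab1 in \<open>auto\<close>)
  then have h2: "(?f has_integral 1/a) {..0}"
    by (auto simp: has_integral_iff dest: absolutely_integrable_on_def[THEN iffD1])
  have "(?f has_integral (1/a + 1/a)) ({0..} \<union> {..0})"
  proof (rule has_integral_Un[OF h1 h2])
    have "{0..} \<inter> {..0::real} = {0}" by auto
    then show "negligible ({0..} \<inter> {..0::real})" by simp
  qed
  moreover have "{0..} \<union> {..0} = (UNIV::real set)" by auto
  ultimately show ?thesis by (simp add: field_simps)
qed

lemma exp_shift_has_integral: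
  assumes a: "a > 0"
  shows "((\<lambda>s::real. exp (- a * \<bar>t - s\<bar>)) has_integral 2/a) UNIV"
proof -
  let ?f = "\<lambda>x::real. exp (- a * \<bar>x\<bar>)"
  have ab: "?f absolutely_integrable_on UNIV \<and> integral UNIV ?f = 2/a"
    using exp_abs_has_integral[OF a] by (auto intro: nonnegative_absolutely_integrable_1 simp: has_integral_iff)
  have img: "(\<lambda>s. t - s) ` UNIV = (UNIV::real set)"
    by (rule surjI[of _ "\<lambda>s. t - s"]) simp
  have "(\<lambda>s. \<bar>-1\<bar> * ?f (t - s)) absolutely_integrable_on UNIV \<and> integral UNIV (\<lambda>s. \<bar>-1\<bar> * ?f (t - s)) = 2/a"
  proof (rule has_absolute_integral_change_of_variables_1'[where g="\<lambda>s. t - s", THEN iffD2])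
    show "((\<lambda>s. t - s) has_field_derivative -1) (at x within UNIV)" for x
      by (auto intro!: derivative_eq_intros)
    show "inj_on (\<lambda>s. t - s) UNIV" by (auto intro: inj_onI)
    show "?f absolutely_integrable_on (\<lambda>s. t - s) ` UNIV \<and> integral ((\<lambda>s. t - s) ` UNIV) ?f = 2/a"
      using ab img by simp
  qed simp
  then show ?thesis
    by (auto simp: has_integral_iff dest: absolutely_integrable_on_def[THEN iffD1])
qed

lemma conv_integrable_bound:
  fixes G h :: "real \<Rightarrow> real"
  assumes Gc: "continuous_on UNIV G" and G0: "\<And>x. 0 \<le> G x" and GK: "\<And>x. G x \<le> K * exp (- \<delta> * \<bar>x\<bar>)"
    and \<mu>: "0 \<le> \<mu>" "\<mu> < \<delta>"
    and hc: "continuous_on UNIV h" and hb: "\<And>s. \<bar>h s\<bar> \<le> A * exp (\<mu> * \<bar>s\<bar>)"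
  shows "(\<lambda>s. G (t - s) * h s) integrable_on UNIV"
    and "\<bar>conv G h t\<bar> \<le> A * K * (2 / (\<delta> - \<mu>)) * exp (\<mu> * \<bar>t\<bar>)"
proof -
  have A0: "A \<ge> 0" using hb[of 0] by (smt (verit) exp_gt_zero mult_nonneg_nonneg zero_le_mult_iff)
  have K0: "K \<ge> 0" using GK[of 0] G0[of 0] by simp
  define g where "g s = A * K * exp (\<mu> * \<bar>t\<bar>) * exp (- (\<delta> - \<mu>) * \<bar>t - s\<bar>)" for s
  have gi: "(g has_integral A * K * exp (\<mu> * \<bar>t\<bar>) * (2 / (\<delta> - \<mu>))) UNIV"
    unfolding g_def by (intro has_integral_mult_right exp_shift_has_integral) (use \<mu> in simp)
  have bnd: "norm (G (t - s) * h s) \<le> g s" for s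
  proof -
    have "norm (G (t - s) * h s) = G (t - s) * \<bar>h s\<bar>" using G0 by (simp add: abs_mult)
    also have "\<dots> \<le> (K * exp (- \<delta> * \<bar>t - s\<bar>)) * (A * exp (\<mu> * \<bar>s\<bar>))"
      by (intro mult_mono GK hb) (use G0 K0 in auto)
    also have "\<dots> = A * K * exp (- \<delta> * \<bar>t - s\<bar> + \<mu> * \<bar>s\<bar>)" by (simp add: exp_add[symmetric])
    also have "\<dots> \<le> A * K * exp (\<mu> * \<bar>t\<bar> + (- (\<delta> - \<mu>) * \<bar>t - s\<bar>))"
    proof -
      have "\<mu> * \<bar>s\<bar> \<le> \<mu> * \<bar>t\<bar> + \<mu> * \<bar>t - s\<bar>"
      proof -
        have "\<bar>s\<bar> \<le> \<bar>t\<bar> + \<bar>t - s\<bar>" by arith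
        then have "\<mu> * \<bar>s\<bar> \<le> \<mu> * (\<bar>t\<bar> + \<bar>t - s\<bar>)" using \<mu> by (intro mult_left_mono) auto
        then show ?thesis by (simp add: distrib_left)
      qed
      then show ?thesis using A0 K0 by (intro mult_left_mono) (auto simp: algebra_simps)
    qed
    also have "\<dots> = g s" by (simp add: g_def exp_add)
    finally show ?thesis .
  qed
  have fc: "continuous_on UNIV (\<lambda>s. G (t - s) * h s)"
    by (intro continuous_intros continuous_on_compose2[OF Gc] hc) auto
  show fi: "(\<lambda>s. G (t - s) * h s) integrable_on UNIV"
    by (rule integrable_on_all_intervals_UNIV[OF _ bnd]) (use gi fc in \<open>auto intro: integrable_continuous_interval continuous_on_subset\<close>)
  have "norm (integral UNIV (\<lambda>s. G (t - s) * h s)) \<le> integral UNIV g"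
    by (rule integral_norm_bound_integral[OF fi _ bnd]) (use gi in auto)
  then show "\<bar>conv G h t\<bar> \<le> A * K * (2 / (\<delta> - \<mu>)) * exp (\<mu> * \<bar>t\<bar>)"
    using gi by (simp add: conv_def has_integral_iff mult_ac)
qed

lemma conv_integrable0:
  fixes G h :: "real \<Rightarrow> real"
  assumes Gc: "continuous_on UNIV G" and G0: "\<And>x. 0 \<le> G x" and GK: "\<And>x. G x \<le> K * exp (- \<delta> * \<bar>x\<bar>)"
    and \<delta>: "0 < \<delta>" and hc: "continuous_on UNIV h" and hb: "\<And>s. \<bar>h s\<bar> \<le> B"
  shows "(\<lambda>s. G (t - s) * h s) integrable_on UNIV"
    and "\<bar>conv G h t\<bar> \<le> B * K * (2 / \<delta>)"
  using conv_integrable_bound[OF Gc G0 GK order_refl \<delta> hc, of B t] hb by auto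

lemma conv_mono:
  fixes G h1 h2 :: "real \<Rightarrow> real"
  assumes Gc: "continuous_on UNIV G" and G0: "\<And>x. 0 \<le> G x" and GK: "\<And>x. G x \<le> K * exp (- \<delta> * \<bar>x\<bar>)"
    and \<delta>: "0 < \<delta>" and hc1: "continuous_on UNIV h1" and hb1: "\<And>s. \<bar>h1 s\<bar> \<le> B1"
    and hc2: "continuous_on UNIV h2" and hb2: "\<And>s. \<bar>h2 s\<bar> \<le> B2"
    and le: "\<And>s. h1 s \<le> h2 s"
  shows "conv G h1 t \<le> conv G h2 t"
  unfolding conv_def
  by (rule integral_le[OF conv_integrable0(1)[OF Gc G0 GK \<delta> hc1 hb1] conv_integrable0(1)[OF Gc G0 GK \<delta> hc2 hb2]])
     (use G0 le in \<open>auto intro: mult_left_mono\<close>)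

lemma conv_diff:
  fixes G h1 h2 :: "real \<Rightarrow> real"
  assumes Gc: "continuous_on UNIV G" and G0: "\<And>x. 0 \<le> G x" and GK: "\<And>x. G x \<le> K * exp (- \<delta> * \<bar>x\<bar>)"
    and \<delta>: "0 < \<delta>" and hc1: "continuous_on UNIV h1" and hb1: "\<And>s. \<bar>h1 s\<bar> \<le> B1"
    and hc2: "continuous_on UNIV h2" and hb2: "\<And>s. \<bar>h2 s\<bar> \<le> B2"
  shows "conv G h1 t - conv G h2 t = conv G (\<lambda>s. h1 s - h2 s) t"
proof -
  have "conv G h1 t - conv G h2 t = integral UNIV (\<lambda>s. G (t - s) * h1 s - G (t - s) * h2 s)"
    unfolding conv_def
    by (rule integral_diff[symmetric, OF conv_integrable0(1)[OF Gc G0 GK \<delta> hc1 hb1] conv_integrable0(1)[OF Gc G0 GK \<delta> hc2 hb2]])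
  then show ?thesis by (simp add: conv_def right_diff_distrib)
qed

lemma exp_small:
  fixes C a e :: real
  assumes "C \<ge> 0" "a > 0" "e > 0"
  shows "C * exp (- a * (2 * C / (a * e))) \<le> e / 2"
proof -
  define R where "R = 2 * C / (a * e)"
  have R0: "R \<ge> 0" using assms by (simp add: R_def)
  have "exp (a * R) \<ge> 1 + a * R" by (rule exp_ge_add_one_self)
  have "C * exp (- a * R) = C / exp (a * R)" by (simp add: exp_minus field_simps)
  also have "\<dots> \<le> C / (1 + a * R)"
    using assms R0 \<open>exp (a * R) \<ge> 1 + a * R\<close> by (intro divide_left_mono mult_pos_pos) (auto intro: add_pos_nonneg)
  also have "\<dots> \<le> e / 2"
  proof (cases "C = 0")
    case True then show ?thesis using assms by simp
  next
    case False
    then have C0: "C > 0" using assms by simp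
    have aR: "a * R = 2 * C / e" using assms by (simp add: R_def field_simps)
    then have aR0: "a * R > 0" using C0 assms by simp
    have "C / (1 + a * R) \<le> C / (a * R)" using C0 aR0 by (intro divide_left_mono) auto
    also have "\<dots> = C / (2 * C / e)" by (simp only: aR)
    also have "\<dots> = e / 2" using C0 assms by (simp add: field_simps)
    finally show ?thesis .
  qed
  finally show ?thesis by (simp add: R_def)
qed

lemma conv_equicont:
  fixes G :: "real \<Rightarrow> real"
  assumes Gc: "continuous_on UNIV G" and G0: "\<And>x. 0 \<le> G x" and GK: "\<And>x. G x \<le> K * exp (- \<delta> * \<bar>x\<bar>)"
    and \<delta>: "0 < \<delta>" and B: "B \<ge> 0" and e: "e > 0"
  shows "\<exists>\<eta>>0. \<forall>h t t'. continuous_on UNIV h \<and> (\<forall>s. \<bar>h s\<bar> \<le> B) \<and> \<bar>t - t'\<bar> < \<eta> \<longrightarrow>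
            \<bar>conv G h t - conv G h t'\<bar> \<le> e"
proof -
  have K0: "K \<ge> 0" using GK[of 0] G0[of 0] by simp
  define a where "a = \<delta> / 2"
  have a0: "a > 0" using \<delta> by (simp add: a_def)
  define C where "C = B * (2 * K * exp \<delta>) * (2 / a)"
  have C0: "C \<ge> 0" using B K0 a0 by (simp add: C_def)
  define R where "R = 2 * C / (a * e)"
  have R0: "R \<ge> 0" using C0 a0 e by (simp add: R_def)
  have CR: "C * exp (- a * R) \<le> e / 2" unfolding R_def by (rule exp_small[OF C0 a0 e])
  define \<omega> where "\<omega> = e / (2 * (2 * R + 1) * (B + 1))"
  have \<omega>0: "\<omega> > 0" using e R0 B by (simp add: \<omega>_def)
  have "uniformly_continuous_on {-R-1..R+1} G"
    by (rule compact_uniformly_continuous) (use Gc in \<open>auto intro: continuous_on_subset\<close>)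
  then obtain d where d0: "d > 0" and d: "\<And>x y. x \<in> {-R-1..R+1} \<Longrightarrow> y \<in> {-R-1..R+1} \<Longrightarrow> dist y x < d \<Longrightarrow> dist (G y) (G x) < \<omega>"
    unfolding uniformly_continuous_on_def using \<omega>0 by metis
  show ?thesis
  proof (intro exI[of _ "min d 1"] conjI allI impI)
    show "min d 1 > 0" using d0 by simp
    fix h :: "real \<Rightarrow> real" and t t' :: real
    assume asm: "continuous_on UNIV h \<and> (\<forall>s. \<bar>h s\<bar> \<le> B) \<and> \<bar>t - t'\<bar> < min d 1"
    then have hc: "continuous_on UNIV h" and hb: "\<And>s. \<bar>h s\<bar> \<le> B" and tt: "\<bar>t - t'\<bar> < d" "\<bar>t - t'\<bar> < 1"
      by auto
    define g where "g s = B * ((if s \<in> {t-R..t+R} then \<omega> else 0) + (2 * K * exp \<delta>) * exp (- a * R) * exp (- a * \<bar>t - s\<bar>))" for s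
    have g1: "((\<lambda>s. if s \<in> {t-R..t+R} then \<omega> else 0) has_integral (2 * R) * \<omega>) UNIV"
    proof -
      have "((\<lambda>s. \<omega>) has_integral (Henstock_Kurzweil_Integration.content {t-R..t+R} *\<^sub>R \<omega>)) {t-R..t+R}"
        by (rule has_integral_const_real)
      then show ?thesis using R0 by (subst has_integral_restrict_UNIV) simp
    qed
    have g2: "((\<lambda>s. (2 * K * exp \<delta>) * exp (- a * R) * exp (- a * \<bar>t - s\<bar>)) has_integral
                 (2 * K * exp \<delta>) * exp (- a * R) * (2 / a)) UNIV"
      by (intro has_integral_mult_right exp_shift_has_integral a0)
    have gi: "(g has_integral B * ((2 * R) * \<omega> + (2 * K * exp \<delta>) * exp (- a * R) * (2 / a))) UNIV"
      unfolding g_def by (intro has_integral_mult_right has_integral_add g1 g2)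
    have bnd: "norm ((G (t - s) - G (t' - s)) * h s) \<le> g s" for s
    proof -
      have "norm ((G (t - s) - G (t' - s)) * h s) = \<bar>G (t - s) - G (t' - s)\<bar> * \<bar>h s\<bar>" by (simp add: abs_mult)
      also have "\<dots> \<le> \<bar>G (t - s) - G (t' - s)\<bar> * B" by (intro mult_left_mono hb) auto
      also have "\<dots> \<le> g s"
      proof (cases "s \<in> {t-R..t+R}")
        case True
        have m1: "t - s \<in> {-R-1..R+1}" using True by auto
        have m2: "t' - s \<in> {-R-1..R+1}" using True tt by (auto simp: abs_less_iff)
        have "dist (t - s) (t' - s) < d" using tt by (simp add: dist_real_def)
        then have "\<bar>G (t - s) - G (t' - s)\<bar> < \<omega>"
          using d[OF m2 m1] by (simp add: dist_real_def)
        moreover have "0 \<le> (2 * K * exp \<delta>) * exp (- a * R) * exp (- a * \<bar>t - s\<bar>)" using K0 by simp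
        ultimately show ?thesis using True B unfolding g_def
          by (smt (verit, best) mult_left_mono mult.commute)
      next
        case False
        then have far: "\<bar>t - s\<bar> > R" by auto
        have e1: "exp (- \<delta> * \<bar>t - s\<bar>) \<le> exp (- a * R) * exp (- a * \<bar>t - s\<bar>)"
        proof -
          have "\<delta> * R \<le> \<delta> * \<bar>t - s\<bar>" using far \<delta> by (intro mult_left_mono) auto
          then show ?thesis by (simp add: exp_add[symmetric] a_def)
        qed
        have e2: "exp (- \<delta> * \<bar>t' - s\<bar>) \<le> exp \<delta> * exp (- \<delta> * \<bar>t - s\<bar>)"
        proof -
          have "\<bar>t - s\<bar> \<le> \<bar>t' - s\<bar> + 1" using tt by arith
          then have "\<delta> * \<bar>t - s\<bar> \<le> \<delta> * (\<bar>t' - s\<bar> + 1)" using \<delta> by (intro mult_left_mono) auto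
          then have "- \<delta> * \<bar>t' - s\<bar> \<le> \<delta> + - \<delta> * \<bar>t - s\<bar>" by (simp add: algebra_simps)
          then show ?thesis by (simp add: exp_add[symmetric])
        qed
        have ed: "1 \<le> exp \<delta>" using \<delta> by simp
        have "\<bar>G (t - s) - G (t' - s)\<bar> \<le> G (t - s) + G (t' - s)" using G0[of "t-s"] G0[of "t'-s"] by arith
        also have "\<dots> \<le> K * exp (- \<delta> * \<bar>t - s\<bar>) + K * exp (- \<delta> * \<bar>t' - s\<bar>)"
          using GK[of "t-s"] GK[of "t'-s"] by (simp add: abs_minus_commute)
        also have "\<dots> \<le> K * exp \<delta> * exp (- \<delta> * \<bar>t - s\<bar>) + K * (exp \<delta> * exp (- \<delta> * \<bar>t - s\<bar>))"
        proof (rule add_mono)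
          have "K * exp (- \<delta> * \<bar>t - s\<bar>) * 1 \<le> K * exp (- \<delta> * \<bar>t - s\<bar>) * exp \<delta>"
            using K0 ed by (intro mult_left_mono) auto
          then show "K * exp (- \<delta> * \<bar>t - s\<bar>) \<le> K * exp \<delta> * exp (- \<delta> * \<bar>t - s\<bar>)" by (simp add: mult_ac)
          show "K * exp (- \<delta> * \<bar>t' - s\<bar>) \<le> K * (exp \<delta> * exp (- \<delta> * \<bar>t - s\<bar>))"
            using K0 e2 by (intro mult_left_mono) auto
        qed
        also have "\<dots> = 2 * K * exp \<delta> * exp (- \<delta> * \<bar>t - s\<bar>)" by simp
        also have "\<dots> \<le> 2 * K * exp \<delta> * (exp (- a * R) * exp (- a * \<bar>t - s\<bar>))"
          using K0 e1 by (intro mult_left_mono) auto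
        finally have "\<bar>G (t - s) - G (t' - s)\<bar> \<le> 2 * K * exp \<delta> * exp (- a * R) * exp (- a * \<bar>t - s\<bar>)"
          by (simp add: mult_ac)
        then have "B * \<bar>G (t - s) - G (t' - s)\<bar> \<le> B * (2 * K * exp \<delta> * exp (- a * R) * exp (- a * \<bar>t - s\<bar>))"
          using B by (rule mult_left_mono)
        moreover have "g s = B * (2 * K * exp \<delta> * exp (- a * R) * exp (- a * \<bar>t - s\<bar>))"
          using False by (auto simp: g_def)
        ultimately show ?thesis by (simp add: mult.commute)
      qed
      finally show ?thesis .
    qed
    have i1: "(\<lambda>s. G (t - s) * h s) integrable_on UNIV" by (rule conv_integrable0(1)[OF Gc G0 GK \<delta> hc hb])
    have i2: "(\<lambda>s. G (t' - s) * h s) integrable_on UNIV" by (rule conv_integrable0(1)[OF Gc G0 GK \<delta> hc hb])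
    have "conv G h t - conv G h t' = integral UNIV (\<lambda>s. G (t - s) * h s - G (t' - s) * h s)"
      unfolding conv_def by (rule integral_diff[symmetric, OF i1 i2])
    also have "\<dots> = integral UNIV (\<lambda>s. (G (t - s) - G (t' - s)) * h s)" by (simp add: left_diff_distrib)
    finally have eq: "conv G h t - conv G h t' = integral UNIV (\<lambda>s. (G (t - s) - G (t' - s)) * h s)" .
    have fi: "(\<lambda>s. (G (t - s) - G (t' - s)) * h s) integrable_on UNIV"
      using integrable_diff[OF i1 i2] by (simp add: left_diff_distrib)
    have "\<bar>conv G h t - conv G h t'\<bar> \<le> integral UNIV g"
      unfolding eq using integral_norm_bound_integral[OF fi _ bnd] gi by auto
    also have "\<dots> = B * ((2 * R) * \<omega>) + C * exp (- a * R)"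
      using gi by (simp add: has_integral_iff C_def algebra_simps)
    also have "\<dots> \<le> e / 2 + e / 2"
    proof (rule add_mono[OF _ CR])
      have "B * ((2 * R) * \<omega>) = e * (B * (2 * R)) / (2 * (2 * R + 1) * (B + 1))" by (simp add: \<omega>_def)
      also have "\<dots> \<le> e / 2"
      proof -
        have "B * (2 * R) \<le> (2 * R + 1) * (B + 1)" using B R0 by (simp add: algebra_simps)
        then have "e * (B * (2 * R)) \<le> e * ((2 * R + 1) * (B + 1))" using e by (intro mult_left_mono) auto
        then have "e * (B * (2 * R)) / (2 * ((2 * R + 1) * (B + 1))) \<le> e * ((2 * R + 1) * (B + 1)) / (2 * ((2 * R + 1) * (B + 1)))"
          using B R0 by (intro divide_right_mono) auto
        also have "\<dots> = e / 2" using B R0 by simp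
        finally show ?thesis by (simp add: mult_ac)
      qed
      finally show "B * ((2 * R) * \<omega>) \<le> e / 2" .
    qed
    finally show "\<bar>conv G h t - conv G h t'\<bar> \<le> e" by simp
  qed
qed

lemma comp_seg3: "comp i (seg3 \<sigma> \<Phi> s) = seg \<sigma> (comp i \<Phi>) s"
  by (simp add: comp_def seg3_def)

lemma comp1: "comp 1 \<Phi> = fst \<Phi>" and comp2: "comp 2 \<Phi> = fst (snd \<Phi>)" and comp3: "comp 3 \<Phi> = snd (snd \<Phi>)"
  by (simp_all add: comp_def)

lemma comp_diff3: "comp i (diff3 \<Phi> \<Psi>) = (\<lambda>t. comp i \<Phi> t - comp i \<Psi> t)"
  by (simp add: comp_def diff3_def)

lemma seg_inX:
  assumes "continuous_on UNIV \<phi>"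
  shows "inX \<sigma> (seg \<sigma> \<phi> s)"
proof -
  have "continuous_on {-\<sigma>..0} (\<lambda>\<theta>. \<phi> (s + \<theta>))"
    by (intro continuous_on_compose2[OF assms] continuous_intros) auto
  then have "continuous_on {-\<sigma>..0} (seg \<sigma> \<phi> s)"
    by (rule continuous_on_eq) (auto simp: seg_def)
  then show ?thesis by (auto simp: inX_def seg_def)
qed

definition okT :: "(nat \<Rightarrow> real) \<Rightarrow> tri \<Rightarrow> bool" where
  "okT M \<Phi> \<longleftrightarrow> (\<forall>i\<in>{1,2,3}. continuous_on UNIV (comp i \<Phi>) \<and> (\<forall>t. 0 \<le> comp i \<Phi> t \<and> comp i \<Phi> t \<le> M i))"

lemma seg3_admissible:
  assumes "okT M \<Phi>"
  shows "admissible \<sigma> M (seg3 \<sigma> \<Phi> s)"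
  unfolding admissible_def comp_seg3
proof (intro ballI)
  fix i :: nat assume i: "i \<in> {1,2,3}"
  have "inX \<sigma> (seg \<sigma> (comp i \<Phi>) s)" using assms i by (intro seg_inX) (auto simp: okT_def)
  moreover have "\<forall>\<theta>\<in>{-\<sigma>..0}. 0 \<le> seg \<sigma> (comp i \<Phi>) s \<theta> \<and> seg \<sigma> (comp i \<Phi>) s \<theta> \<le> M i"
    using assms i by (auto simp: okT_def seg_def)
  ultimately show "inX \<sigma> (seg \<sigma> (comp i \<Phi>) s) \<and> (\<forall>\<theta>\<in>{-\<sigma>..0}. 0 \<le> seg \<sigma> (comp i \<Phi>) s \<theta> \<and> seg \<sigma> (comp i \<Phi>) s \<theta> \<le> M i)" by blast
qed

lemma seg3_le:
  assumes "\<forall>i\<in>{1,2,3}. \<forall>t. comp i \<Phi> t \<le> comp i \<Psi> t"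
  shows "leX3 \<sigma> (seg3 \<sigma> \<Phi> s) (seg3 \<sigma> \<Psi> s)"
  using assms unfolding leX3_def comp_seg3 by (auto simp: seg_def)

lemma xnorm_le:
  assumes "\<sigma> > 0" "\<And>\<theta>. \<theta> \<in> {-\<sigma>..0} \<Longrightarrow> \<bar>\<phi> \<theta>\<bar> \<le> e"
  shows "xnorm \<sigma> \<phi> \<le> e"
  unfolding xnorm_def using assms by (intro cSUP_least) auto

lemma xnorm3_seg_le:
  assumes "\<sigma> > 0" "\<And>i \<theta>. i \<in> {1,2,3} \<Longrightarrow> \<theta> \<in> {-\<sigma>..0} \<Longrightarrow> \<bar>comp i \<Phi> (s + \<theta>) - comp i \<Psi> (s' + \<theta>)\<bar> \<le> e"
  shows "xnorm3 \<sigma> (diff3 (seg3 \<sigma> \<Phi> s) (seg3 \<sigma> \<Psi> s')) \<le> e"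
proof -
  have "xnorm \<sigma> (comp i (diff3 (seg3 \<sigma> \<Phi> s) (seg3 \<sigma> \<Psi> s'))) \<le> e" if "i \<in> {1,2,3}" for i
    unfolding comp_diff3 comp_seg3
    by (rule xnorm_le[OF assms(1)]) (use assms(2)[OF that] in \<open>auto simp: seg_def\<close>)
  from this[of 1] this[of 2] this[of 3] show ?thesis unfolding xnorm3_def comp1 comp2 comp3 by simp
qed

lemma hat0_admissible:
  assumes "\<forall>i\<in>{1,2,3}. M i \<ge> 0"
  shows "admissible \<sigma> M (hat \<sigma> 0, hat \<sigma> 0, hat \<sigma> 0)"
proof -
  have "continuous_on {-\<sigma>..0} (hat \<sigma> 0)"
    by (rule continuous_on_eq[of _ "\<lambda>_. 0"]) (auto simp: hat_def)
  then show ?thesis using assms by (auto simp: admissible_def comp_def inX_def hat_def)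
qed

lemma C2_lip:
  assumes "C2 \<sigma> M f L" "i \<in> {1,2,3}" "admissible \<sigma> M P" "admissible \<sigma> M Q"
  shows "\<bar>f i P - f i Q\<bar> \<le> L i * xnorm3 \<sigma> (diff3 P Q)"
  using assms unfolding C2_def by blast

lemma f_bound:
  assumes s0: "\<sigma> > 0" and C1: "C1 \<sigma> k f" and C2: "C2 \<sigma> M f L" and Mpos: "\<forall>i\<in>{1,2,3}. M i \<ge> 0"
    and ok: "okT M \<Phi>" and i: "i \<in> {1,2,3}"
  shows "\<bar>f i (seg3 \<sigma> \<Phi> s)\<bar> \<le> L i * max (M 1) (max (M 2) (M 3))"
proof -
  let ?Z = "(hat \<sigma> 0, hat \<sigma> 0, hat \<sigma> 0)"
  have Lp: "L i > 0" using C2 i by (auto simp: C2_def)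
  have lip: "\<bar>f i (seg3 \<sigma> \<Phi> s) - f i ?Z\<bar> \<le> L i * xnorm3 \<sigma> (diff3 (seg3 \<sigma> \<Phi> s) ?Z)"
    by (rule C2_lip[OF C2 i seg3_admissible[OF ok] hat0_admissible[OF Mpos]])
  have z: "f i ?Z = 0" using C1 i by (auto simp: C1_def)
  have xn: "xnorm3 \<sigma> (diff3 (seg3 \<sigma> \<Phi> s) ?Z) \<le> max (M 1) (max (M 2) (M 3))"
  proof -
    have "?Z = seg3 \<sigma> (\<lambda>_. 0, \<lambda>_. 0, \<lambda>_. 0) s" by (auto simp: seg3_def seg_def hat_def)
    moreover have "xnorm3 \<sigma> (diff3 (seg3 \<sigma> \<Phi> s) (seg3 \<sigma> (\<lambda>_. 0, \<lambda>_. 0, \<lambda>_. 0) s)) \<le> max (M 1) (max (M 2) (M 3))"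
    proof (rule xnorm3_seg_le[OF s0])
      fix j :: nat and \<theta> :: real assume j: "j \<in> {1,2,3}"
      have "0 \<le> comp j \<Phi> (s + \<theta>)" "comp j \<Phi> (s + \<theta>) \<le> M j" using ok j by (auto simp: okT_def)
      moreover have "M j \<le> max (M 1) (max (M 2) (M 3))" using j by auto
      moreover have "comp j (\<lambda>_. 0, \<lambda>_. 0, \<lambda>_. 0) x = (0::real)" for x by (simp add: comp_def)
      ultimately show "\<bar>comp j \<Phi> (s + \<theta>) - comp j (\<lambda>_. 0, \<lambda>_. 0, \<lambda>_. 0) (s + \<theta>)\<bar> \<le> max (M 1) (max (M 2) (M 3))"
        by simp
    qed
    ultimately show ?thesis by simp
  qed
  have "\<bar>f i (seg3 \<sigma> \<Phi> s)\<bar> \<le> L i * xnorm3 \<sigma> (diff3 (seg3 \<sigma> \<Phi> s) ?Z)" using lip z by simp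
  also have "\<dots> \<le> L i * max (M 1) (max (M 2) (M 3))" using xn Lp by (intro mult_left_mono) auto
  finally show ?thesis .
qed

lemma unif_shift:
  fixes \<phi> :: "real \<Rightarrow> real" and p \<sigma> e :: real
  assumes c: "continuous_on UNIV \<phi>" and p: "\<sigma> \<ge> 0" and e: "e > 0"
  shows "\<exists>d>0. \<forall>s \<theta>. \<bar>s - p\<bar> < d \<and> \<theta> \<in> {-\<sigma>..0} \<longrightarrow> \<bar>\<phi> (s + \<theta>) - \<phi> (p + \<theta>)\<bar> < e"
proof -
  have "uniformly_continuous_on {p-\<sigma>-1..p+1} \<phi>"
    by (rule compact_uniformly_continuous) (use c in \<open>auto intro: continuous_on_subset\<close>)
  then have "\<exists>d>0. \<forall>x\<in>{p-\<sigma>-1..p+1}. \<forall>x'\<in>{p-\<sigma>-1..p+1}. dist x' x < d \<longrightarrow> dist (\<phi> x') (\<phi> x) < e"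
    using e unfolding uniformly_continuous_on_def by blast
  then obtain d where d0: "d > 0" and dd: "\<forall>x\<in>{p-\<sigma>-1..p+1}. \<forall>x'\<in>{p-\<sigma>-1..p+1}. dist x' x < d \<longrightarrow> dist (\<phi> x') (\<phi> x) < e"
    by blast
  have d: "\<And>x y. x \<in> {p-\<sigma>-1..p+1} \<Longrightarrow> y \<in> {p-\<sigma>-1..p+1} \<Longrightarrow> dist y x < d \<Longrightarrow> dist (\<phi> y) (\<phi> x) < e"
    using dd by blast
  show ?thesis
  proof (intro exI[of _ "min d 1"] conjI allI impI)
    show "min d 1 > 0" using d0 by simp
    fix s \<theta> assume a: "\<bar>s - p\<bar> < min d 1 \<and> \<theta> \<in> {-\<sigma>..0}"
    have m1: "p + \<theta> \<in> {p-\<sigma>-1..p+1}" using a by auto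
    have m2: "s + \<theta> \<in> {p-\<sigma>-1..p+1}" using a by (simp add: abs_less_iff)
    have "dist (s + \<theta>) (p + \<theta>) < d" using a by (simp add: dist_real_def)
    then show "\<bar>\<phi> (s + \<theta>) - \<phi> (p + \<theta>)\<bar> < e" using d[OF m1 m2] by (simp add: dist_real_def)
  qed
qed

lemma f_seg_cont:
  assumes s0: "\<sigma> > 0" and C2: "C2 \<sigma> M f L" and ok: "okT M \<Phi>" and i: "i \<in> {1,2,3}"
  shows "continuous_on UNIV (\<lambda>s. f i (seg3 \<sigma> \<Phi> s))"
  unfolding continuous_on_iff
proof (intro ballI allI impI)
  fix p :: real and e :: real assume e: "e > 0"
  have Lp: "L i > 0" and Lip: "\<And>P Q. admissible \<sigma> M P \<Longrightarrow> admissible \<sigma> M Q \<Longrightarrow> \<bar>f i P - f i Q\<bar> \<le> L i * xnorm3 \<sigma> (diff3 P Q)"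
    using C2 i by (auto simp: C2_def)
  define e' where "e' = e / (2 * L i)"
  have e': "e' > 0" using e Lp by (simp add: e'_def)
  have s0': "\<sigma> \<ge> 0" using s0 by simp
  have cj: "continuous_on UNIV (comp j \<Phi>)" if "j \<in> {1,2,3}" for j using ok that by (auto simp: okT_def)
  obtain d1 where d1: "d1 > 0" "\<forall>s \<theta>. \<bar>s - p\<bar> < d1 \<and> \<theta> \<in> {-\<sigma>..0} \<longrightarrow> \<bar>comp 1 \<Phi> (s + \<theta>) - comp 1 \<Phi> (p + \<theta>)\<bar> < e'"
    using unif_shift[where p=p, OF cj[of 1] s0' e'] by auto
  obtain d2 where d2: "d2 > 0" "\<forall>s \<theta>. \<bar>s - p\<bar> < d2 \<and> \<theta> \<in> {-\<sigma>..0} \<longrightarrow> \<bar>comp 2 \<Phi> (s + \<theta>) - comp 2 \<Phi> (p + \<theta>)\<bar> < e'"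
    using unif_shift[where p=p, OF cj[of 2] s0' e'] by auto
  obtain d3 where d3: "d3 > 0" "\<forall>s \<theta>. \<bar>s - p\<bar> < d3 \<and> \<theta> \<in> {-\<sigma>..0} \<longrightarrow> \<bar>comp 3 \<Phi> (s + \<theta>) - comp 3 \<Phi> (p + \<theta>)\<bar> < e'"
    using unif_shift[where p=p, OF cj[of 3] s0' e'] by auto
  show "\<exists>d>0. \<forall>s\<in>UNIV. dist s p < d \<longrightarrow> dist (f i (seg3 \<sigma> \<Phi> s)) (f i (seg3 \<sigma> \<Phi> p)) < e"
  proof (intro exI[of _ "min d1 (min d2 d3)"] conjI ballI impI)
    show "min d1 (min d2 d3) > 0" using d1 d2 d3 by simp
    fix s assume "dist s p < min d1 (min d2 d3)"
    then have ss: "\<bar>s - p\<bar> < d1" "\<bar>s - p\<bar> < d2" "\<bar>s - p\<bar> < d3" by (auto simp: dist_real_def)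
    have "xnorm3 \<sigma> (diff3 (seg3 \<sigma> \<Phi> s) (seg3 \<sigma> \<Phi> p)) \<le> e'"
    proof (rule xnorm3_seg_le[OF s0])
      fix j :: nat and \<theta> :: real assume j: "j \<in> {1,2,3}" and th: "\<theta> \<in> {-\<sigma>..0}"
      have a1: "\<bar>comp 1 \<Phi> (s + \<theta>) - comp 1 \<Phi> (p + \<theta>)\<bar> < e'" using d1(2) ss(1) th by blast
      have a2: "\<bar>comp 2 \<Phi> (s + \<theta>) - comp 2 \<Phi> (p + \<theta>)\<bar> < e'" using d2(2) ss(2) th by blast
      have a3: "\<bar>comp 3 \<Phi> (s + \<theta>) - comp 3 \<Phi> (p + \<theta>)\<bar> < e'" using d3(2) ss(3) th by blast
      consider "j = 1" | "j = 2" | "j = 3" using j by blast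
      then show "\<bar>comp j \<Phi> (s + \<theta>) - comp j \<Phi> (p + \<theta>)\<bar> \<le> e'"
        using a1 a2 a3 by cases (simp_all add: less_imp_le)
    qed
    then have "L i * xnorm3 \<sigma> (diff3 (seg3 \<sigma> \<Phi> s) (seg3 \<sigma> \<Phi> p)) \<le> L i * e'"
      using Lp by (intro mult_left_mono) auto
    then have "\<bar>f i (seg3 \<sigma> \<Phi> s) - f i (seg3 \<sigma> \<Phi> p)\<bar> \<le> L i * e'"
      using Lip[OF seg3_admissible[OF ok, where s=s] seg3_admissible[OF ok, where s=p]] by linarith
    also have "\<dots> < e" using Lp e by (simp add: e'_def)
    finally show "dist (f i (seg3 \<sigma> \<Phi> s)) (f i (seg3 \<sigma> \<Phi> p)) < e" by (simp add: dist_real_def)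
  qed
qed

lemma H_cont:
  assumes s0: "\<sigma> > 0" and C2: "C2 \<sigma> M f L" and ok: "okT M \<Phi>" and i: "i \<in> {1,2,3}"
  shows "continuous_on UNIV (H \<sigma> f \<beta> r i \<Phi>)"
proof -
  have c1: "continuous_on UNIV (\<lambda>t. f i (seg3 \<sigma> \<Phi> (t + r i)))"
    by (rule continuous_on_compose2[OF f_seg_cont[OF s0 C2 ok i]]) (auto intro!: continuous_intros)
  have ci: "continuous_on UNIV (comp i \<Phi>)" using ok i unfolding okT_def by blast
  have c2: "continuous_on UNIV (\<lambda>t. comp i \<Phi> (t + r i))"
    by (rule continuous_on_compose2[OF ci]) (auto intro!: continuous_intros)
  have e: "H \<sigma> f \<beta> r i \<Phi> = (\<lambda>t. f i (seg3 \<sigma> \<Phi> (t + r i)) + \<beta> i * comp i \<Phi> (t + r i))"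
    by (simp add: H_def fun_eq_iff)
  show ?thesis unfolding e by (intro continuous_on_add continuous_on_mult_left c1 c2)
qed

lemma H_bound:
  assumes s0: "\<sigma> > 0" and C1: "C1 \<sigma> k f" and C2: "C2 \<sigma> M f L" and Mpos: "\<forall>i\<in>{1,2,3}. M i \<ge> 0"
    and ok: "okT M \<Phi>" and i: "i \<in> {1,2,3}" and b: "\<beta> i > 0"
  shows "\<bar>H \<sigma> f \<beta> r i \<Phi> t\<bar> \<le> (L i + \<beta> i) * max (M 1) (max (M 2) (M 3))"
proof -
  have "0 \<le> comp i \<Phi> (t + r i)" "comp i \<Phi> (t + r i) \<le> M i" using ok i by (auto simp: okT_def)
  moreover have "M i \<le> max (M 1) (max (M 2) (M 3))" using i by auto
  ultimately have "\<bar>comp i \<Phi> (t + r i)\<bar> \<le> max (M 1) (max (M 2) (M 3))" by simp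
  then have "\<bar>\<beta> i * comp i \<Phi> (t + r i)\<bar> \<le> \<beta> i * max (M 1) (max (M 2) (M 3))"
    using b by (simp add: abs_mult mult_left_mono)
  moreover have "\<bar>H \<sigma> f \<beta> r i \<Phi> t\<bar> \<le> \<bar>f i (seg3 \<sigma> \<Phi> (t + r i))\<bar> + \<bar>\<beta> i * comp i \<Phi> (t + r i)\<bar>"
    unfolding H_def by (rule abs_triangle_ineq)
  moreover note f_bound[OF s0 C1 C2 Mpos ok i, of "t + r i"]
  moreover have "(L i + \<beta> i) * max (M 1) (max (M 2) (M 3)) = L i * max (M 1) (max (M 2) (M 3)) + \<beta> i * max (M 1) (max (M 2) (M 3))"
    by (rule distrib_right)
  ultimately show ?thesis by linarith
qed

lemma Gcond_D:
  assumes "Gcond D c r \<beta> G K \<delta>" "i \<in> {1,2,3}"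
  shows "K i > 0" "\<delta> i > 0" "continuous_on UNIV (G i)" "\<And>x. 0 \<le> G i x" "\<And>x. G i x \<le> K i * exp (- \<delta> i * \<bar>x\<bar>)"
    "\<And>h. continuous_on UNIV h \<Longrightarrow> bounded (range h) \<Longrightarrow> is_sol (D i) c (r i) (\<beta> i) h (conv (G i) h)"
    "\<And>h y. continuous_on UNIV h \<Longrightarrow> bounded (range h) \<Longrightarrow> bounded (range y) \<Longrightarrow> is_sol (D i) c (r i) (\<beta> i) h y \<Longrightarrow> y = conv (G i) h"
  using assms unfolding Gcond_def by blast+

lemma bounded_range_abs: "bounded (range (h::real \<Rightarrow> real)) \<Longrightarrow> \<exists>B. \<forall>t. \<bar>h t\<bar> \<le> B"
  unfolding bounded_iff by auto

lemma abs_bound_bounded: "(\<And>t. \<bar>h t\<bar> \<le> (B::real)) \<Longrightarrow> bounded (range h)"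
  unfolding bounded_iff by auto

lemma C2b_cont: "C2b x \<Longrightarrow> continuous_on UNIV x"
  unfolding C2b_def by (auto intro!: continuous_at_imp_continuous_on differentiable_imp_continuous_within)

lemma C2b_cont': "C2b x \<Longrightarrow> continuous_on UNIV (deriv x)"
  unfolding C2b_def by (auto intro!: continuous_at_imp_continuous_on differentiable_imp_continuous_within)

lemma conv_cont:
  assumes "Gcond D c r \<beta> G K \<delta>" "i \<in> {1,2,3}" "continuous_on UNIV h" "bounded (range h)"
  shows "continuous_on UNIV (conv (G i) h)"
  using Gcond_D(6)[OF assms] unfolding is_sol_def
  by (auto intro!: continuous_at_imp_continuous_on differentiable_imp_continuous_within)

lemma rep_sol:
  assumes GC: "Gcond D c r \<beta> G K \<delta>" and i: "i \<in> {1,2,3}" and x: "C2b x"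
  shows "x = conv (G i) (\<lambda>t. \<beta> i * x (t + r i) - D i * deriv (deriv x) t + c * deriv x (t + r i))"
    and "continuous_on UNIV (\<lambda>t. \<beta> i * x (t + r i) - D i * deriv (deriv x) t + c * deriv x (t + r i))"
    and "\<exists>B. \<forall>t. \<bar>\<beta> i * x (t + r i) - D i * deriv (deriv x) t + c * deriv x (t + r i)\<bar> \<le> B"
proof -
  let ?h = "\<lambda>t. \<beta> i * x (t + r i) - D i * deriv (deriv x) t + c * deriv x (t + r i)"
  have c0: "continuous_on UNIV x" by (rule C2b_cont[OF x])
  have c1: "continuous_on UNIV (deriv x)" by (rule C2b_cont'[OF x])
  have c2: "continuous_on UNIV (deriv (deriv x))" using x by (simp add: C2b_def)
  show hc: "continuous_on UNIV ?h"
    by (intro continuous_intros continuous_on_compose2[OF c0] continuous_on_compose2[OF c1] c2) auto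
  obtain B0 where B0: "\<And>t. \<bar>x t\<bar> \<le> B0" using x bounded_range_abs unfolding C2b_def by blast
  obtain B1 where B1: "\<And>t. \<bar>deriv x t\<bar> \<le> B1" using x bounded_range_abs unfolding C2b_def by blast
  obtain B2 where B2: "\<And>t. \<bar>deriv (deriv x) t\<bar> \<le> B2" using x bounded_range_abs unfolding C2b_def by blast
  have hb: "\<bar>?h t\<bar> \<le> \<bar>\<beta> i\<bar> * B0 + \<bar>D i\<bar> * B2 + \<bar>c\<bar> * B1" for t
  proof -
    have "\<bar>?h t\<bar> \<le> \<bar>\<beta> i\<bar> * \<bar>x (t + r i)\<bar> + \<bar>D i\<bar> * \<bar>deriv (deriv x) t\<bar> + \<bar>c\<bar> * \<bar>deriv x (t + r i)\<bar>"
      by (simp add: abs_mult[symmetric])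
    also have "\<dots> \<le> \<bar>\<beta> i\<bar> * B0 + \<bar>D i\<bar> * B2 + \<bar>c\<bar> * B1"
      by (intro add_mono mult_left_mono B0 B1 B2) auto
    finally show ?thesis .
  qed
  then show "\<exists>B. \<forall>t. \<bar>?h t\<bar> \<le> B" by blast
  have hbd: "bounded (range ?h)" by (rule abs_bound_bounded[OF hb])
  have xb: "bounded (range x)" using x by (simp add: C2b_def)
  have sol: "is_sol (D i) c (r i) (\<beta> i) ?h x" using x unfolding is_sol_def C2b_def by simp
  show "x = conv (G i) ?h" by (rule Gcond_D(7)[OF GC i hc hbd xb sol])
qed

lemma upper_cmp:
  assumes GC: "Gcond D c r \<beta> G K \<delta>" and i: "i \<in> {1,2,3}" and s0: "\<sigma> > 0"
    and C1: "C1 \<sigma> k f" and C2: "C2 \<sigma> M f L" and Mpos: "\<forall>i\<in>{1,2,3}. M i \<ge> 0" and b: "\<beta> i > 0"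
    and x: "C2b x" and ok: "okT M \<Psi>" and cx: "comp i \<Psi> = x"
    and W: "\<And>t. Wop \<sigma> D c r f i x \<Psi> t \<le> 0"
  shows "Fop \<sigma> f \<beta> r G i \<Psi> t \<le> x t"
proof -
  let ?h = "\<lambda>t. \<beta> i * x (t + r i) - D i * deriv (deriv x) t + c * deriv x (t + r i)"
  obtain B where hb: "\<And>t. \<bar>?h t\<bar> \<le> B" using rep_sol(3)[OF GC i x] by blast
  have le: "H \<sigma> f \<beta> r i \<Psi> s \<le> ?h s" for s
    using W[of s] unfolding H_def Wop_def cx by simp
  have "conv (G i) (H \<sigma> f \<beta> r i \<Psi>) t \<le> conv (G i) ?h t"
    by (rule conv_mono[OF Gcond_D(3,4,5,2)[OF GC i] H_cont[OF s0 C2 ok i] H_bound[where \<beta>=\<beta> and i=i and r=r, OF s0 C1 C2 Mpos ok i b]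
          rep_sol(2)[OF GC i x] hb le])
  also have "\<dots> = x t" using rep_sol(1)[OF GC i x] by simp
  finally show ?thesis by (simp add: Fop_def)
qed

lemma lower_cmp:
  assumes GC: "Gcond D c r \<beta> G K \<delta>" and i: "i \<in> {1,2,3}" and s0: "\<sigma> > 0"
    and C1: "C1 \<sigma> k f" and C2: "C2 \<sigma> M f L" and Mpos: "\<forall>i\<in>{1,2,3}. M i \<ge> 0" and b: "\<beta> i > 0"
    and x: "C2b x" and ok: "okT M \<Psi>" and cx: "comp i \<Psi> = x"
    and W: "\<And>t. Wop \<sigma> D c r f i x \<Psi> t \<ge> 0"
  shows "x t \<le> Fop \<sigma> f \<beta> r G i \<Psi> t"
proof -
  let ?h = "\<lambda>t. \<beta> i * x (t + r i) - D i * deriv (deriv x) t + c * deriv x (t + r i)"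
  obtain B where hb: "\<And>t. \<bar>?h t\<bar> \<le> B" using rep_sol(3)[OF GC i x] by blast
  have le: "?h s \<le> H \<sigma> f \<beta> r i \<Psi> s" for s
    using W[of s] unfolding H_def Wop_def cx by simp
  have "x t = conv (G i) ?h t" using rep_sol(1)[OF GC i x] by simp
  also have "\<dots> \<le> conv (G i) (H \<sigma> f \<beta> r i \<Psi>) t"
    by (rule conv_mono[OF Gcond_D(3,4,5,2)[OF GC i] rep_sol(2)[OF GC i x] hb
          H_cont[OF s0 C2 ok i] H_bound[where \<beta>=\<beta> and i=i and r=r, OF s0 C1 C2 Mpos ok i b] le])
  finally show ?thesis by (simp add: Fop_def)
qed

lemma PQM_D:
  assumes "PQM \<sigma> M f \<beta>" "admissible \<sigma> M X" "admissible \<sigma> M Y" "leX3 \<sigma> Y X"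
  shows "f 1 X - f 1 Y + \<beta> 1 * (fst X 0 - fst Y 0) \<ge> 0"
    "f 2 X - f 2 (fst X, fst (snd Y), snd (snd X)) + \<beta> 2 * (fst (snd X) 0 - fst (snd Y) 0) \<ge> 0"
    "f 2 X \<le> f 2 (fst Y, fst (snd X), snd (snd X))"
    "f 2 X \<le> f 2 (fst X, fst (snd X), snd (snd Y))"
    "f 3 X - f 3 Y + \<beta> 3 * (snd (snd X) 0 - snd (snd Y) 0) \<ge> 0"
proof -
  obtain a1 b1 c1 where X: "X = (a1, b1, c1)" by (cases X) auto
  obtain a2 b2 c2 where Y: "Y = (a2, b2, c2)" by (cases Y) auto
  have "f 1 (a1, b1, c1) - f 1 (a2, b2, c2) + \<beta> 1 * (a1 0 - a2 0) \<ge> 0 \<and>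
       f 2 (a1, b1, c1) - f 2 (a1, b2, c1) + \<beta> 2 * (b1 0 - b2 0) \<ge> 0 \<and>
       f 2 (a1, b1, c1) \<le> f 2 (a2, b1, c1) \<and>
       f 2 (a1, b1, c1) \<le> f 2 (a1, b1, c2) \<and>
       f 3 (a1, b1, c1) - f 3 (a2, b2, c2) + \<beta> 3 * (c1 0 - c2 0) \<ge> 0"
    using assms unfolding X Y PQM_def by blast
  then show "f 1 X - f 1 Y + \<beta> 1 * (fst X 0 - fst Y 0) \<ge> 0"
    "f 2 X - f 2 (fst X, fst (snd Y), snd (snd X)) + \<beta> 2 * (fst (snd X) 0 - fst (snd Y) 0) \<ge> 0"
    "f 2 X \<le> f 2 (fst Y, fst (snd X), snd (snd X))"
    "f 2 X \<le> f 2 (fst X, fst (snd X), snd (snd Y))"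
    "f 3 X - f 3 Y + \<beta> 3 * (snd (snd X) 0 - snd (snd Y) 0) \<ge> 0"
    unfolding X Y by auto
qed

lemma seg0: "\<sigma> > 0 \<Longrightarrow> seg \<sigma> \<phi> s 0 = \<phi> s"
  by (simp add: seg_def)

lemma okT_mix:
  assumes "okT M A" "okT M B" "okT M C"
  shows "okT M (fst A, fst (snd B), snd (snd C))"
  using assms unfolding okT_def comp_def by auto

definition leT :: "tri \<Rightarrow> tri \<Rightarrow> bool" where
  "leT P Q \<longleftrightarrow> (\<forall>i\<in>{1,2,3}. \<forall>t. comp i P t \<le> comp i Q t)"

lemma HM1:
  assumes s0: "\<sigma> > 0" and PQM: "PQM \<sigma> M f \<beta>" and P: "okT M P" and Q: "okT M Q" and le: "leT Q P"
  shows "H \<sigma> f \<beta> r 1 Q t \<le> H \<sigma> f \<beta> r 1 P t"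
proof -
  have "f 1 (seg3 \<sigma> P (t + r 1)) - f 1 (seg3 \<sigma> Q (t + r 1)) + \<beta> 1 * (fst (seg3 \<sigma> P (t + r 1)) 0 - fst (seg3 \<sigma> Q (t + r 1)) 0) \<ge> 0"
    by (rule PQM_D(1)[OF PQM seg3_admissible[OF P] seg3_admissible[OF Q] seg3_le]) (use le in \<open>simp add: leT_def\<close>)
  then show ?thesis unfolding H_def by (simp add: seg3_def seg0[OF s0] comp_def right_diff_distrib)
qed

lemma HM3:
  assumes s0: "\<sigma> > 0" and PQM: "PQM \<sigma> M f \<beta>" and P: "okT M P" and Q: "okT M Q" and le: "leT Q P"
  shows "H \<sigma> f \<beta> r 3 Q t \<le> H \<sigma> f \<beta> r 3 P t"
proof -
  have "f 3 (seg3 \<sigma> P (t + r 3)) - f 3 (seg3 \<sigma> Q (t + r 3)) + \<beta> 3 * (snd (snd (seg3 \<sigma> P (t + r 3))) 0 - snd (snd (seg3 \<sigma> Q (t + r 3))) 0) \<ge> 0"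
    by (rule PQM_D(5)[OF PQM seg3_admissible[OF P] seg3_admissible[OF Q] seg3_le]) (use le in \<open>simp add: leT_def\<close>)
  then show ?thesis unfolding H_def by (simp add: seg3_def seg0[OF s0] comp_def right_diff_distrib)
qed

lemma HM2:
  assumes s0: "\<sigma> > 0" and PQM: "PQM \<sigma> M f \<beta>" and P: "okT M P" and Q: "okT M Q"
    and l1: "\<And>t. fst Q t \<le> fst P t" and l2: "\<And>t. fst (snd P) t \<le> fst (snd Q) t" and l3: "\<And>t. snd (snd Q) t \<le> snd (snd P) t"
  shows "H \<sigma> f \<beta> r 2 P t \<le> H \<sigma> f \<beta> r 2 Q t"
proof -
  let ?s = "t + r 2"
  define R1 where "R1 = (fst P, fst (snd Q), snd (snd P))"
  define R2 where "R2 = (fst Q, fst (snd Q), snd (snd P))"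
  have R1: "okT M R1" unfolding R1_def by (rule okT_mix[OF P Q P])
  have R2: "okT M R2" unfolding R2_def by (rule okT_mix[OF Q Q P])
  have "f 2 (seg3 \<sigma> R1 ?s) - f 2 (fst (seg3 \<sigma> R1 ?s), fst (snd (seg3 \<sigma> P ?s)), snd (snd (seg3 \<sigma> R1 ?s)))
        + \<beta> 2 * (fst (snd (seg3 \<sigma> R1 ?s)) 0 - fst (snd (seg3 \<sigma> P ?s)) 0) \<ge> 0"
    by (rule PQM_D(2)[OF PQM seg3_admissible[OF R1] seg3_admissible[OF P] seg3_le])
       (use l2 in \<open>simp add: R1_def comp_def\<close>)
  then have s1: "f 2 (seg3 \<sigma> P ?s) + \<beta> 2 * fst (snd P) ?s \<le> f 2 (seg3 \<sigma> R1 ?s) + \<beta> 2 * fst (snd Q) ?s"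
    by (simp add: seg3_def seg0[OF s0] R1_def algebra_simps)
  have "f 2 (seg3 \<sigma> R1 ?s) \<le> f 2 (fst (seg3 \<sigma> R2 ?s), fst (snd (seg3 \<sigma> R1 ?s)), snd (snd (seg3 \<sigma> R1 ?s)))"
    by (rule PQM_D(3)[OF PQM seg3_admissible[OF R1] seg3_admissible[OF R2] seg3_le])
       (use l1 in \<open>simp add: R1_def R2_def comp_def\<close>)
  then have s2: "f 2 (seg3 \<sigma> R1 ?s) \<le> f 2 (seg3 \<sigma> R2 ?s)"
    by (simp add: seg3_def R1_def R2_def)
  have "f 2 (seg3 \<sigma> R2 ?s) \<le> f 2 (fst (seg3 \<sigma> R2 ?s), fst (snd (seg3 \<sigma> R2 ?s)), snd (snd (seg3 \<sigma> Q ?s)))"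
    by (rule PQM_D(4)[OF PQM seg3_admissible[OF R2] seg3_admissible[OF Q] seg3_le])
       (use l3 in \<open>simp add: R2_def comp_def\<close>)
  then have s3: "f 2 (seg3 \<sigma> R2 ?s) \<le> f 2 (seg3 \<sigma> Q ?s)"
    by (simp add: seg3_def R2_def)
  show ?thesis using s1 s2 s3 unfolding H_def comp2 by simp
qed

lemma Fop_mono:
  assumes GC: "Gcond D c r \<beta> G K \<delta>" and i: "i \<in> {1,2,3}" and s0: "\<sigma> > 0"
    and C1: "C1 \<sigma> k f" and C2: "C2 \<sigma> M f L" and Mpos: "\<forall>i\<in>{1,2,3}. M i \<ge> 0" and b: "\<beta> i > 0"
    and P: "okT M P" and Q: "okT M Q" and le: "\<And>s. H \<sigma> f \<beta> r i P s \<le> H \<sigma> f \<beta> r i Q s"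
  shows "Fop \<sigma> f \<beta> r G i P t \<le> Fop \<sigma> f \<beta> r G i Q t"
  unfolding Fop_def
  by (rule conv_mono[OF Gcond_D(3,4,5,2)[OF GC i] H_cont[OF s0 C2 P i] H_bound[where \<beta>=\<beta> and i=i and r=r, OF s0 C1 C2 Mpos P i b]
          H_cont[OF s0 C2 Q i] H_bound[where \<beta>=\<beta> and i=i and r=r, OF s0 C1 C2 Mpos Q i b] le])

lemma Fop_cont:
  assumes GC: "Gcond D c r \<beta> G K \<delta>" and i: "i \<in> {1,2,3}" and s0: "\<sigma> > 0"
    and C1: "C1 \<sigma> k f" and C2: "C2 \<sigma> M f L" and Mpos: "\<forall>i\<in>{1,2,3}. M i \<ge> 0" and b: "\<beta> i > 0"
    and P: "okT M P"
  shows "continuous_on UNIV (Fop \<sigma> f \<beta> r G i P)"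
  unfolding Fop_def
  by (rule conv_cont[OF GC i H_cont[OF s0 C2 P i] abs_bound_bounded[OF H_bound[where \<beta>=\<beta> and i=i and r=r, OF s0 C1 C2 Mpos P i b]]])

lemma Gamma_okT:
  assumes "\<Phi> \<in> Gamma lo up" "\<forall>i\<in>{1,2,3}. \<forall>t. 0 \<le> comp i lo t \<and> comp i lo t \<le> comp i up t \<and> comp i up t \<le> M i"
  shows "okT M \<Phi>" "leT lo \<Phi>" "leT \<Phi> up"
proof -
  have G: "\<forall>i\<in>{1,2,3}. continuous_on UNIV (comp i \<Phi>) \<and> (\<forall>t. comp i lo t \<le> comp i \<Phi> t \<and> comp i \<Phi> t \<le> comp i up t)"
    using assms(1) by (simp add: Gamma_def)
  show "okT M \<Phi>" unfolding okT_def
  proof (intro ballI conjI allI)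
    fix i :: nat and t assume i: "i \<in> {1,2,3}"
    show "continuous_on UNIV (comp i \<Phi>)" using G i by blast
    show "0 \<le> comp i \<Phi> t" using G assms(2) i by (meson order_trans)
    show "comp i \<Phi> t \<le> M i" using G assms(2) i by (meson order_trans)
  qed
  show "leT lo \<Phi>" "leT \<Phi> up" using G unfolding leT_def by blast+
qed

lemma part1:
  fixes \<sigma> c :: real
    and D r k M L \<beta> K \<delta> :: "nat \<Rightarrow> real"
    and f :: "nat \<Rightarrow> tri \<Rightarrow> real"
    and G :: "nat \<Rightarrow> real \<Rightarrow> real"
    and up lo :: tri
  assumes s0: "\<sigma> > 0" and "c > 0"
    and DkM: "\<forall>i\<in>{1,2,3}. D i > 0 \<and> k i > 0 \<and> M i \<ge> k i"
    and C1: "C1 \<sigma> k f"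
    and C2: "C2 \<sigma> M f L"
    and PQM: "PQM \<sigma> M f \<beta>"
    and GC: "Gcond D c r \<beta> G K \<delta>"
    and UL: "upper_lower \<sigma> D c r f up lo"
    and bnd: "\<forall>i\<in>{1,2,3}. \<forall>t. 0 \<le> comp i lo t \<and> comp i lo t \<le> comp i up t \<and> comp i up t \<le> M i"
    and \<Phi>: "\<Phi> \<in> Gamma lo up"
  shows "F3 \<sigma> f \<beta> r G \<Phi> \<in> Gamma lo up \<and>
       (\<forall>t.
         fst lo t \<le> Fop \<sigma> f \<beta> r G 1 lo t \<and>
         Fop \<sigma> f \<beta> r G 1 lo t \<le> Fop \<sigma> f \<beta> r G 1 \<Phi> t \<and>
         Fop \<sigma> f \<beta> r G 1 \<Phi> t \<le> Fop \<sigma> f \<beta> r G 1 up t \<and>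
         Fop \<sigma> f \<beta> r G 1 up t \<le> fst up t \<and>
         fst (snd lo) t \<le> Fop \<sigma> f \<beta> r G 2 (fst up, fst (snd lo), snd (snd up)) t \<and>
         Fop \<sigma> f \<beta> r G 2 (fst up, fst (snd lo), snd (snd up)) t \<le> Fop \<sigma> f \<beta> r G 2 \<Phi> t \<and>
         Fop \<sigma> f \<beta> r G 2 \<Phi> t \<le> Fop \<sigma> f \<beta> r G 2 (fst lo, fst (snd up), snd (snd lo)) t \<and>
         Fop \<sigma> f \<beta> r G 2 (fst lo, fst (snd up), snd (snd lo)) t \<le> fst (snd up) t \<and>
         snd (snd lo) t \<le> Fop \<sigma> f \<beta> r G 3 lo t \<and>
         Fop \<sigma> f \<beta> r G 3 lo t \<le> Fop \<sigma> f \<beta> r G 3 \<Phi> t \<and>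
         Fop \<sigma> f \<beta> r G 3 \<Phi> t \<le> Fop \<sigma> f \<beta> r G 3 up t \<and>
         Fop \<sigma> f \<beta> r G 3 up t \<le> snd (snd up) t)"
proof -
  have Mpos: "\<forall>i\<in>{1,2,3}. M i \<ge> 0" using DkM by force
  have b1: "\<beta> 1 > 0" and b2: "\<beta> 2 > 0" and b3: "\<beta> 3 > 0" using PQM by (auto simp: PQM_def)
  have i1: "(1::nat) \<in> {1,2,3}" and i2: "(2::nat) \<in> {1,2,3}" and i3: "(3::nat) \<in> {1,2,3}" by auto
  have C2bs: "\<forall>i\<in>{1,2,3}. C2b (comp i up) \<and> C2b (comp i lo)" using UL by (simp add: upper_lower_def)
  then have u1: "C2b (fst up)" and u2: "C2b (fst (snd up))" and u3: "C2b (snd (snd up))"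
    and l1: "C2b (fst lo)" and l2: "C2b (fst (snd lo))" and l3: "C2b (snd (snd lo))"
    by (auto simp: comp_def)
  have W: "\<And>t. Wop \<sigma> D c r f 1 (fst up) up t \<le> 0 \<and>
          Wop \<sigma> D c r f 2 (fst (snd up)) (fst lo, fst (snd up), snd (snd lo)) t \<le> 0 \<and>
          Wop \<sigma> D c r f 3 (snd (snd up)) up t \<le> 0 \<and>
          Wop \<sigma> D c r f 1 (fst lo) lo t \<ge> 0 \<and>
          Wop \<sigma> D c r f 2 (fst (snd lo)) (fst up, fst (snd lo), snd (snd up)) t \<ge> 0 \<and>
          Wop \<sigma> D c r f 3 (snd (snd lo)) lo t \<ge> 0"
    using UL unfolding upper_lower_def by simp
  have okup: "okT M up" unfolding okT_def
  proof (intro ballI conjI allI)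
    fix i :: nat and t assume i: "i \<in> {1,2,3}"
    show "continuous_on UNIV (comp i up)" using C2bs i C2b_cont by blast
    show "0 \<le> comp i up t" using bnd i by (meson order_trans)
    show "comp i up t \<le> M i" using bnd i by (meson order_trans)
  qed
  have oklo: "okT M lo" unfolding okT_def
  proof (intro ballI conjI allI)
    fix i :: nat and t assume i: "i \<in> {1,2,3}"
    show "continuous_on UNIV (comp i lo)" using C2bs i C2b_cont by blast
    show "0 \<le> comp i lo t" using bnd i by (meson order_trans)
    show "comp i lo t \<le> M i" using bnd i by (meson order_trans)
  qed
  have okA: "okT M (fst up, fst (snd lo), snd (snd up))" by (rule okT_mix[OF okup oklo okup])
  have okB: "okT M (fst lo, fst (snd up), snd (snd lo))" by (rule okT_mix[OF oklo okup oklo])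
  have ok: "okT M \<Phi>" and lp: "leT lo \<Phi>" and pu: "leT \<Phi> up" using Gamma_okT[OF \<Phi> bnd] by auto
  have lo1: "\<And>t. fst lo t \<le> fst \<Phi> t" and lo2: "\<And>t. fst (snd lo) t \<le> fst (snd \<Phi>) t" and lo3: "\<And>t. snd (snd lo) t \<le> snd (snd \<Phi>) t"
    using lp by (auto simp: leT_def comp_def)
  have up1: "\<And>t. fst \<Phi> t \<le> fst up t" and up2: "\<And>t. fst (snd \<Phi>) t \<le> fst (snd up) t" and up3: "\<And>t. snd (snd \<Phi>) t \<le> snd (snd up) t"
    using pu by (auto simp: leT_def comp_def)
  note FM1 = Fop_mono[OF GC i1 s0 C1 C2 Mpos b1]
  note FM2 = Fop_mono[OF GC i2 s0 C1 C2 Mpos b2]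
  note FM3 = Fop_mono[OF GC i3 s0 C1 C2 Mpos b3]
  have ch: "fst lo t \<le> Fop \<sigma> f \<beta> r G 1 lo t \<and>
         Fop \<sigma> f \<beta> r G 1 lo t \<le> Fop \<sigma> f \<beta> r G 1 \<Phi> t \<and>
         Fop \<sigma> f \<beta> r G 1 \<Phi> t \<le> Fop \<sigma> f \<beta> r G 1 up t \<and>
         Fop \<sigma> f \<beta> r G 1 up t \<le> fst up t \<and>
         fst (snd lo) t \<le> Fop \<sigma> f \<beta> r G 2 (fst up, fst (snd lo), snd (snd up)) t \<and>
         Fop \<sigma> f \<beta> r G 2 (fst up, fst (snd lo), snd (snd up)) t \<le> Fop \<sigma> f \<beta> r G 2 \<Phi> t \<and>
         Fop \<sigma> f \<beta> r G 2 \<Phi> t \<le> Fop \<sigma> f \<beta> r G 2 (fst lo, fst (snd up), snd (snd lo)) t \<and>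
         Fop \<sigma> f \<beta> r G 2 (fst lo, fst (snd up), snd (snd lo)) t \<le> fst (snd up) t \<and>
         snd (snd lo) t \<le> Fop \<sigma> f \<beta> r G 3 lo t \<and>
         Fop \<sigma> f \<beta> r G 3 lo t \<le> Fop \<sigma> f \<beta> r G 3 \<Phi> t \<and>
         Fop \<sigma> f \<beta> r G 3 \<Phi> t \<le> Fop \<sigma> f \<beta> r G 3 up t \<and>
         Fop \<sigma> f \<beta> r G 3 up t \<le> snd (snd up) t" for t
  proof (intro conjI)
    show "fst lo t \<le> Fop \<sigma> f \<beta> r G 1 lo t"
      by (rule lower_cmp[OF GC i1 s0 C1 C2 Mpos b1 l1 oklo]) (use W in \<open>auto simp: comp_def\<close>)
    show "Fop \<sigma> f \<beta> r G 1 lo t \<le> Fop \<sigma> f \<beta> r G 1 \<Phi> t"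
      by (rule FM1[OF oklo ok HM1[OF s0 PQM ok oklo lp]])
    show "Fop \<sigma> f \<beta> r G 1 \<Phi> t \<le> Fop \<sigma> f \<beta> r G 1 up t"
      by (rule FM1[OF ok okup HM1[OF s0 PQM okup ok pu]])
    show "Fop \<sigma> f \<beta> r G 1 up t \<le> fst up t"
      by (rule upper_cmp[OF GC i1 s0 C1 C2 Mpos b1 u1 okup]) (use W in \<open>auto simp: comp_def\<close>)
    show "fst (snd lo) t \<le> Fop \<sigma> f \<beta> r G 2 (fst up, fst (snd lo), snd (snd up)) t"
      by (rule lower_cmp[OF GC i2 s0 C1 C2 Mpos b2 l2 okA]) (use W in \<open>auto simp: comp_def\<close>)
    show "Fop \<sigma> f \<beta> r G 2 (fst up, fst (snd lo), snd (snd up)) t \<le> Fop \<sigma> f \<beta> r G 2 \<Phi> t"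
      by (rule FM2[OF okA ok HM2[OF s0 PQM okA ok]]) (simp_all add: up1 lo2 up3)
    show "Fop \<sigma> f \<beta> r G 2 \<Phi> t \<le> Fop \<sigma> f \<beta> r G 2 (fst lo, fst (snd up), snd (snd lo)) t"
      by (rule FM2[OF ok okB HM2[OF s0 PQM ok okB]]) (simp_all add: lo1 up2 lo3)
    show "Fop \<sigma> f \<beta> r G 2 (fst lo, fst (snd up), snd (snd lo)) t \<le> fst (snd up) t"
      by (rule upper_cmp[OF GC i2 s0 C1 C2 Mpos b2 u2 okB]) (use W in \<open>auto simp: comp_def\<close>)
    show "snd (snd lo) t \<le> Fop \<sigma> f \<beta> r G 3 lo t"
      by (rule lower_cmp[OF GC i3 s0 C1 C2 Mpos b3 l3 oklo]) (use W in \<open>auto simp: comp_def\<close>)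
    show "Fop \<sigma> f \<beta> r G 3 lo t \<le> Fop \<sigma> f \<beta> r G 3 \<Phi> t"
      by (rule FM3[OF oklo ok HM3[OF s0 PQM ok oklo lp]])
    show "Fop \<sigma> f \<beta> r G 3 \<Phi> t \<le> Fop \<sigma> f \<beta> r G 3 up t"
      by (rule FM3[OF ok okup HM3[OF s0 PQM okup ok pu]])
    show "Fop \<sigma> f \<beta> r G 3 up t \<le> snd (snd up) t"
      by (rule upper_cmp[OF GC i3 s0 C1 C2 Mpos b3 u3 okup]) (use W in \<open>auto simp: comp_def\<close>)
  qed
  have inG: "F3 \<sigma> f \<beta> r G \<Phi> \<in> Gamma lo up"
  proof -
    have c1: "continuous_on UNIV (Fop \<sigma> f \<beta> r G 1 \<Phi>)" by (rule Fop_cont[OF GC i1 s0 C1 C2 Mpos b1 ok])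
    have c2: "continuous_on UNIV (Fop \<sigma> f \<beta> r G 2 \<Phi>)" by (rule Fop_cont[OF GC i2 s0 C1 C2 Mpos b2 ok])
    have c3: "continuous_on UNIV (Fop \<sigma> f \<beta> r G 3 \<Phi>)" by (rule Fop_cont[OF GC i3 s0 C1 C2 Mpos b3 ok])
    have "\<forall>t. fst lo t \<le> Fop \<sigma> f \<beta> r G 1 \<Phi> t \<and> Fop \<sigma> f \<beta> r G 1 \<Phi> t \<le> fst up t"
      "\<forall>t. fst (snd lo) t \<le> Fop \<sigma> f \<beta> r G 2 \<Phi> t \<and> Fop \<sigma> f \<beta> r G 2 \<Phi> t \<le> fst (snd up) t"
      "\<forall>t. snd (snd lo) t \<le> Fop \<sigma> f \<beta> r G 3 \<Phi> t \<and> Fop \<sigma> f \<beta> r G 3 \<Phi> t \<le> snd (snd up) t"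
      using ch by (meson order_trans)+
    then show ?thesis using c1 c2 c3 unfolding Gamma_def F3_def comp_def by auto
  qed
  show ?thesis using inG ch by blast
qed

definition wt :: "real \<Rightarrow> tri \<Rightarrow> real \<Rightarrow> real" where
  "wt \<mu> \<Phi> t = exp (- \<mu> * \<bar>t\<bar>) * max \<bar>fst \<Phi> t\<bar> (max \<bar>fst (snd \<Phi>) t\<bar> \<bar>snd (snd \<Phi>) t\<bar>)"

lemma wnorm_wt: "wnorm \<mu> \<Phi> = (SUP t. wt \<mu> \<Phi> t)"
  unfolding wnorm_def wt_def by simp

lemma wt_le_wnorm: "bdd_above (range (wt \<mu> \<Phi>)) \<Longrightarrow> wt \<mu> \<Phi> t \<le> wnorm \<mu> \<Phi>"
  unfolding wnorm_wt by (rule cSUP_upper) auto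

lemma wnorm_le: "(\<And>t. wt \<mu> \<Phi> t \<le> C) \<Longrightarrow> wnorm \<mu> \<Phi> \<le> C"
  unfolding wnorm_wt by (rule cSUP_least) auto

lemma wt_nonneg: "wt \<mu> \<Phi> t \<ge> 0"
  unfolding wt_def by simp

lemma wt_comp_le:
  assumes "j \<in> {1,2,3}"
  shows "exp (- \<mu> * \<bar>t\<bar>) * \<bar>comp j \<Phi> t\<bar> \<le> wt \<mu> \<Phi> t"
  using assms unfolding wt_def comp_def by (auto intro!: mult_left_mono)

lemma wt_le_from_comps:
  assumes "\<And>j. j \<in> {1,2,3} \<Longrightarrow> exp (- \<mu> * \<bar>t\<bar>) * \<bar>comp j \<Phi> t\<bar> \<le> C"
  shows "wt \<mu> \<Phi> t \<le> C"
proof -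
  have "exp (- \<mu> * \<bar>t\<bar>) * \<bar>fst \<Phi> t\<bar> \<le> C" "exp (- \<mu> * \<bar>t\<bar>) * \<bar>fst (snd \<Phi>) t\<bar> \<le> C"
       "exp (- \<mu> * \<bar>t\<bar>) * \<bar>snd (snd \<Phi>) t\<bar> \<le> C"
    using assms[of 1] assms[of 2] assms[of 3] by (auto simp: comp_def)
  then show ?thesis unfolding wt_def by (simp add: max_def)
qed

lemma wt_bdd:
  assumes "\<And>j t. j \<in> {1,2,3} \<Longrightarrow> \<bar>comp j \<Phi> t\<bar> \<le> B" "\<mu> \<ge> 0"
  shows "wt \<mu> \<Phi> t \<le> B"
proof (rule wt_le_from_comps)
  fix j :: nat assume j: "j \<in> {1,2,3}"
  have "exp (- \<mu> * \<bar>t\<bar>) \<le> 1" using assms(2) by simp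
  moreover have "\<bar>comp j \<Phi> t\<bar> \<le> B" by (rule assms(1)[OF j])
  ultimately show "exp (- \<mu> * \<bar>t\<bar>) * \<bar>comp j \<Phi> t\<bar> \<le> B"
    by (metis abs_ge_zero exp_gt_zero less_eq_real_def mult_left_le_one_le order_trans)
qed

lemma Gamma_diff_bound:
  assumes "\<Phi> \<in> Gamma lo up" "\<Psi> \<in> Gamma lo up"
    "\<forall>i\<in>{1,2,3}. \<forall>t. 0 \<le> comp i lo t \<and> comp i lo t \<le> comp i up t \<and> comp i up t \<le> M i"
    "j \<in> {1,2,3}"
  shows "\<bar>comp j (diff3 \<Psi> \<Phi>) t\<bar> \<le> max (M 1) (max (M 2) (M 3))"
proof -
  have a: "comp j lo t \<le> comp j \<Phi> t" "comp j \<Phi> t \<le> comp j up t" "comp j lo t \<le> comp j \<Psi> t" "comp j \<Psi> t \<le> comp j up t"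
    using assms(1,2,4) unfolding Gamma_def by auto
  have b: "0 \<le> comp j lo t" "comp j up t \<le> M j" using assms(3,4) by auto
  have c: "M j \<le> max (M 1) (max (M 2) (M 3))" using assms(4) by auto
  show ?thesis unfolding comp_diff3 using a b c by linarith
qed

lemma wnorm_diff_props:
  assumes "\<Phi> \<in> Gamma lo up" "\<Psi> \<in> Gamma lo up"
    "\<forall>i\<in>{1,2,3}. \<forall>t. 0 \<le> comp i lo t \<and> comp i lo t \<le> comp i up t \<and> comp i up t \<le> M i"
    "\<mu> \<ge> 0"
  shows "wnorm \<mu> (diff3 \<Psi> \<Phi>) \<ge> 0"
    and "\<And>j u. j \<in> {1,2,3} \<Longrightarrow> \<bar>comp j \<Psi> u - comp j \<Phi> u\<bar> \<le> wnorm \<mu> (diff3 \<Psi> \<Phi>) * exp (\<mu> * \<bar>u\<bar>)"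
proof -
  have bdd: "bdd_above (range (wt \<mu> (diff3 \<Psi> \<Phi>)))"
    using wt_bdd[OF Gamma_diff_bound[OF assms(1,2,3)] assms(4)] by (rule bdd_aboveI2)
  show "wnorm \<mu> (diff3 \<Psi> \<Phi>) \<ge> 0" using wt_le_wnorm[OF bdd, of 0] wt_nonneg[of \<mu> "diff3 \<Psi> \<Phi>" 0] by linarith
  fix j :: nat and u :: real assume j: "j \<in> {1,2,3}"
  have "exp (- \<mu> * \<bar>u\<bar>) * \<bar>comp j \<Psi> u - comp j \<Phi> u\<bar> \<le> wnorm \<mu> (diff3 \<Psi> \<Phi>)"
    using wt_comp_le[OF j, of \<mu> u "diff3 \<Psi> \<Phi>"] wt_le_wnorm[OF bdd, of u] unfolding comp_diff3 by linarith
  then have "exp (\<mu> * \<bar>u\<bar>) * (exp (- \<mu> * \<bar>u\<bar>) * \<bar>comp j \<Psi> u - comp j \<Phi> u\<bar>) \<le> exp (\<mu> * \<bar>u\<bar>) * wnorm \<mu> (diff3 \<Psi> \<Phi>)"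
    by (intro mult_left_mono) auto
  then show "\<bar>comp j \<Psi> u - comp j \<Phi> u\<bar> \<le> wnorm \<mu> (diff3 \<Psi> \<Phi>) * exp (\<mu> * \<bar>u\<bar>)"
    by (simp add: mult.assoc[symmetric] exp_add[symmetric] mult.commute)
qed

lemma Hdiff_bound:
  assumes s0: "\<sigma> > 0" and C2: "C2 \<sigma> M f L" and i: "i \<in> {1,2,3}" and b: "\<beta> i > 0"
    and P: "okT M P" and Q: "okT M Q" and W0: "W \<ge> 0" and \<mu>: "\<mu> \<ge> 0"
    and d: "\<And>j u. j \<in> {1,2,3} \<Longrightarrow> \<bar>comp j P u - comp j Q u\<bar> \<le> W * exp (\<mu> * \<bar>u\<bar>)"
  shows "\<bar>H \<sigma> f \<beta> r i P s - H \<sigma> f \<beta> r i Q s\<bar> \<le> ((L i + \<beta> i) * W * exp (\<mu> * (\<bar>r i\<bar> + \<sigma>))) * exp (\<mu> * \<bar>s\<bar>)"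
proof -
  let ?u = "s + r i"
  let ?E = "W * exp (\<mu> * (\<bar>s\<bar> + \<bar>r i\<bar> + \<sigma>))"
  have Lp: "L i > 0" using C2 i by (auto simp: C2_def)
  have dd: "\<bar>comp j P (?u + \<theta>) - comp j Q (?u + \<theta>)\<bar> \<le> ?E" if j: "j \<in> {1,2,3}" and th: "\<theta> \<in> {-\<sigma>..0}" for j \<theta>
  proof -
    have "\<bar>?u + \<theta>\<bar> \<le> \<bar>s\<bar> + \<bar>r i\<bar> + \<sigma>" using th by auto
    then have "exp (\<mu> * \<bar>?u + \<theta>\<bar>) \<le> exp (\<mu> * (\<bar>s\<bar> + \<bar>r i\<bar> + \<sigma>))" using \<mu> by (simp add: mult_left_mono)
    then have "W * exp (\<mu> * \<bar>?u + \<theta>\<bar>) \<le> ?E" using W0 by (simp add: mult_left_mono)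
    then show ?thesis using d[OF j, of "?u + \<theta>"] by linarith
  qed
  have xn: "xnorm3 \<sigma> (diff3 (seg3 \<sigma> P ?u) (seg3 \<sigma> Q ?u)) \<le> ?E"
    by (rule xnorm3_seg_le[OF s0 dd])
  have "\<bar>f i (seg3 \<sigma> P ?u) - f i (seg3 \<sigma> Q ?u)\<bar> \<le> L i * xnorm3 \<sigma> (diff3 (seg3 \<sigma> P ?u) (seg3 \<sigma> Q ?u))"
    by (rule C2_lip[OF C2 i seg3_admissible[OF P] seg3_admissible[OF Q]])
  also have "\<dots> \<le> L i * ?E" using xn Lp by (intro mult_left_mono) auto
  finally have f1: "\<bar>f i (seg3 \<sigma> P ?u) - f i (seg3 \<sigma> Q ?u)\<bar> \<le> L i * ?E" .
  have "\<bar>comp i P ?u - comp i Q ?u\<bar> \<le> ?E" using dd[OF i, of 0] s0 by simp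
  then have f2: "\<bar>\<beta> i * comp i P ?u - \<beta> i * comp i Q ?u\<bar> \<le> \<beta> i * ?E"
    using b by (simp add: right_diff_distrib[symmetric] abs_mult mult_left_mono)
  have "\<bar>H \<sigma> f \<beta> r i P s - H \<sigma> f \<beta> r i Q s\<bar> \<le> \<bar>f i (seg3 \<sigma> P ?u) - f i (seg3 \<sigma> Q ?u)\<bar> + \<bar>\<beta> i * comp i P ?u - \<beta> i * comp i Q ?u\<bar>"
    unfolding H_def by linarith
  also have "\<dots> \<le> L i * ?E + \<beta> i * ?E" using f1 f2 by linarith
  also have "\<dots> = ((L i + \<beta> i) * W * exp (\<mu> * (\<bar>r i\<bar> + \<sigma>))) * exp (\<mu> * \<bar>s\<bar>)"
    by (simp add: algebra_simps exp_add[symmetric])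
  finally show ?thesis .
qed

lemma Fdiff_bound:
  assumes GC: "Gcond D c r \<beta> G K \<delta>" and i: "i \<in> {1,2,3}" and s0: "\<sigma> > 0"
    and C1: "C1 \<sigma> k f" and C2: "C2 \<sigma> M f L" and Mpos: "\<forall>i\<in>{1,2,3}. M i \<ge> 0" and b: "\<beta> i > 0"
    and P: "okT M P" and Q: "okT M Q" and W0: "W \<ge> 0" and \<mu>: "0 \<le> \<mu>" "\<mu> < \<delta> i"
    and d: "\<And>j u. j \<in> {1,2,3} \<Longrightarrow> \<bar>comp j P u - comp j Q u\<bar> \<le> W * exp (\<mu> * \<bar>u\<bar>)"
  shows "exp (- \<mu> * \<bar>t\<bar>) * \<bar>Fop \<sigma> f \<beta> r G i P t - Fop \<sigma> f \<beta> r G i Q t\<bar>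
          \<le> W * ((L i + \<beta> i) * exp (\<mu> * (\<bar>r i\<bar> + \<sigma>)) * K i * (2 / (\<delta> i - \<mu>)))"
proof -
  let ?A = "(L i + \<beta> i) * W * exp (\<mu> * (\<bar>r i\<bar> + \<sigma>))"
  have hc: "continuous_on UNIV (\<lambda>s. H \<sigma> f \<beta> r i P s - H \<sigma> f \<beta> r i Q s)"
    by (intro continuous_on_diff H_cont[OF s0 C2 P i] H_cont[OF s0 C2 Q i])
  have eq: "Fop \<sigma> f \<beta> r G i P t - Fop \<sigma> f \<beta> r G i Q t = conv (G i) (\<lambda>s. H \<sigma> f \<beta> r i P s - H \<sigma> f \<beta> r i Q s) t"
    unfolding Fop_def
    by (rule conv_diff[OF Gcond_D(3,4,5,2)[OF GC i] H_cont[OF s0 C2 P i] H_bound[where \<beta>=\<beta> and i=i and r=r, OF s0 C1 C2 Mpos P i b]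
          H_cont[OF s0 C2 Q i] H_bound[where \<beta>=\<beta> and i=i and r=r, OF s0 C1 C2 Mpos Q i b]])
  have "\<bar>Fop \<sigma> f \<beta> r G i P t - Fop \<sigma> f \<beta> r G i Q t\<bar> \<le> ?A * K i * (2 / (\<delta> i - \<mu>)) * exp (\<mu> * \<bar>t\<bar>)"
    unfolding eq
    by (rule conv_integrable_bound(2)[OF Gcond_D(3,4,5)[OF GC i] \<mu> hc Hdiff_bound[where \<beta>=\<beta> and i=i and r=r, OF s0 C2 i b P Q W0 \<mu>(1) d]])
  then have "exp (- \<mu> * \<bar>t\<bar>) * \<bar>Fop \<sigma> f \<beta> r G i P t - Fop \<sigma> f \<beta> r G i Q t\<bar> \<le> exp (- \<mu> * \<bar>t\<bar>) * (?A * K i * (2 / (\<delta> i - \<mu>)) * exp (\<mu> * \<bar>t\<bar>))"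
    by (intro mult_left_mono) auto
  also have "\<dots> = ?A * K i * (2 / (\<delta> i - \<mu>))"
    by (simp add: mult_ac exp_add[symmetric])
  finally show ?thesis by (simp add: mult_ac)
qed

lemma comp_F3: "j \<in> {1,2,3} \<Longrightarrow> comp j (F3 \<sigma> f \<beta> r G \<Phi>) = Fop \<sigma> f \<beta> r G j \<Phi>"
  by (auto simp: comp_def F3_def)

lemma part2:
  fixes \<sigma> c \<mu> :: real
    and D r k M L \<beta> K \<delta> :: "nat \<Rightarrow> real"
    and f :: "nat \<Rightarrow> tri \<Rightarrow> real"
    and G :: "nat \<Rightarrow> real \<Rightarrow> real"
    and up lo :: tri
  assumes s0: "\<sigma> > 0" and cpos: "c > 0"
    and DkM: "\<forall>i\<in>{1,2,3}. D i > 0 \<and> k i > 0 \<and> M i \<ge> k i"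
    and C1: "C1 \<sigma> k f"
    and C2: "C2 \<sigma> M f L"
    and PQM: "PQM \<sigma> M f \<beta>"
    and GC: "Gcond D c r \<beta> G K \<delta>"
    and UL: "upper_lower \<sigma> D c r f up lo"
    and bnd: "\<forall>i\<in>{1,2,3}. \<forall>t. 0 \<le> comp i lo t \<and> comp i lo t \<le> comp i up t \<and> comp i up t \<le> M i"
    and \<mu>0: "0 < \<mu>" and \<mu>1: "\<mu> < min (\<delta> 1) (min (\<delta> 2) (\<delta> 3))"
  shows "F3 \<sigma> f \<beta> r G ` Gamma lo up \<subseteq> Bmu \<mu> \<and>
        (\<forall>\<Phi>\<in>Gamma lo up. \<forall>\<epsilon>>0. \<exists>\<eta>>0. \<forall>\<Psi>\<in>Gamma lo up.
           wnorm \<mu> (diff3 \<Psi> \<Phi>) < \<eta> \<longrightarrow>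
           wnorm \<mu> (diff3 (F3 \<sigma> f \<beta> r G \<Psi>) (F3 \<sigma> f \<beta> r G \<Phi>)) < \<epsilon>)"
proof
  have Mpos: "\<forall>i\<in>{1,2,3}. M i \<ge> 0" using DkM by force
  have inG: "F3 \<sigma> f \<beta> r G \<Phi> \<in> Gamma lo up" if "\<Phi> \<in> Gamma lo up" for \<Phi>
    using part1[OF s0 cpos DkM C1 C2 PQM GC UL bnd that] by blast
  show "F3 \<sigma> f \<beta> r G ` Gamma lo up \<subseteq> Bmu \<mu>"
  proof
    fix X assume "X \<in> F3 \<sigma> f \<beta> r G ` Gamma lo up"
    then have X: "X \<in> Gamma lo up" using inG by blast
    have ok: "okT M X" using Gamma_okT[OF X bnd] by blast
    have "\<bar>comp j X t\<bar> \<le> max (M 1) (max (M 2) (M 3))" if "j \<in> {1,2,3}" for j t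
    proof -
      have "0 \<le> comp j X t" "comp j X t \<le> M j" using ok that by (auto simp: okT_def)
      moreover have "M j \<le> max (M 1) (max (M 2) (M 3))" using that by auto
      ultimately show ?thesis by simp
    qed
    then have "wt \<mu> X t \<le> max (M 1) (max (M 2) (M 3))" for t
      using \<mu>0 by (intro wt_bdd) auto
    then have "bdd_above (range (wt \<mu> X))" by (rule bdd_aboveI2)
    moreover have "\<forall>i\<in>{1,2,3}. continuous_on UNIV (comp i X)" using ok by (simp add: okT_def)
    ultimately show "X \<in> Bmu \<mu>" unfolding Bmu_def wt_def[abs_def] by simp
  qed
  show "\<forall>\<Phi>\<in>Gamma lo up. \<forall>\<epsilon>>0. \<exists>\<eta>>0. \<forall>\<Psi>\<in>Gamma lo up.
           wnorm \<mu> (diff3 \<Psi> \<Phi>) < \<eta> \<longrightarrow>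
           wnorm \<mu> (diff3 (F3 \<sigma> f \<beta> r G \<Psi>) (F3 \<sigma> f \<beta> r G \<Phi>)) < \<epsilon>"
  proof (intro ballI allI impI)
    fix \<Phi> \<epsilon> assume \<Phi>: "\<Phi> \<in> Gamma lo up" and \<epsilon>: "(\<epsilon>::real) > 0"
    define Cc where "Cc i = (L i + \<beta> i) * exp (\<mu> * (\<bar>r i\<bar> + \<sigma>)) * K i * (2 / (\<delta> i - \<mu>))" for i
    have Cc0: "Cc i \<ge> 0" if "i \<in> {1,2,3}" for i
    proof -
      have "L i > 0" using C2 that by (auto simp: C2_def)
      moreover have "\<beta> i > 0" using PQM that by (auto simp: PQM_def)
      moreover have "K i > 0" using Gcond_D(1)[OF GC that] .
      moreover have "\<delta> i > \<mu>" using \<mu>1 that by auto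
      ultimately show ?thesis by (simp add: Cc_def)
    qed
    define Cs where "Cs = Cc 1 + Cc 2 + Cc 3"
    have CcCs: "Cc i \<le> Cs" if "i \<in> {1,2,3}" for i using Cc0[of 1] Cc0[of 2] Cc0[of 3] that by (auto simp: Cs_def)
    have Cs0: "Cs \<ge> 0" using Cc0[of 1] Cc0[of 2] Cc0[of 3] by (simp add: Cs_def)
    show "\<exists>\<eta>>0. \<forall>\<Psi>\<in>Gamma lo up. wnorm \<mu> (diff3 \<Psi> \<Phi>) < \<eta> \<longrightarrow>
           wnorm \<mu> (diff3 (F3 \<sigma> f \<beta> r G \<Psi>) (F3 \<sigma> f \<beta> r G \<Phi>)) < \<epsilon>"
    proof (intro exI[of _ "\<epsilon> / (Cs + 1)"] conjI ballI impI)
      show "\<epsilon> / (Cs + 1) > 0" using \<epsilon> Cs0 by simp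
      fix \<Psi> assume \<Psi>: "\<Psi> \<in> Gamma lo up" and W: "wnorm \<mu> (diff3 \<Psi> \<Phi>) < \<epsilon> / (Cs + 1)"
      let ?W = "wnorm \<mu> (diff3 \<Psi> \<Phi>)"
      have W0: "?W \<ge> 0" using wnorm_diff_props(1)[OF \<Phi> \<Psi> bnd] \<mu>0 by simp
      have d: "\<And>j u. j \<in> {1,2,3} \<Longrightarrow> \<bar>comp j \<Psi> u - comp j \<Phi> u\<bar> \<le> ?W * exp (\<mu> * \<bar>u\<bar>)"
        using wnorm_diff_props(2)[OF \<Phi> \<Psi> bnd] \<mu>0 by simp
      have okP: "okT M \<Psi>" and okQ: "okT M \<Phi>" using Gamma_okT[OF \<Psi> bnd] Gamma_okT[OF \<Phi> bnd] by blast+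
      have "wt \<mu> (diff3 (F3 \<sigma> f \<beta> r G \<Psi>) (F3 \<sigma> f \<beta> r G \<Phi>)) t \<le> ?W * Cs" for t
      proof (rule wt_le_from_comps)
        fix j :: nat assume j: "j \<in> {1,2,3}"
        have bj: "\<beta> j > 0" using PQM j by (auto simp: PQM_def)
        have mj: "\<mu> < \<delta> j" using \<mu>1 j by auto
        have "exp (- \<mu> * \<bar>t\<bar>) * \<bar>Fop \<sigma> f \<beta> r G j \<Psi> t - Fop \<sigma> f \<beta> r G j \<Phi> t\<bar> \<le> ?W * Cc j"
          unfolding Cc_def
          by (rule Fdiff_bound[OF GC j s0 C1 C2 Mpos bj okP okQ W0 _ mj d]) (use \<mu>0 in simp_all)
        also have "\<dots> \<le> ?W * Cs" using W0 CcCs[OF j] by (rule mult_left_mono[rotated])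
        finally show "exp (- \<mu> * \<bar>t\<bar>) * \<bar>comp j (diff3 (F3 \<sigma> f \<beta> r G \<Psi>) (F3 \<sigma> f \<beta> r G \<Phi>)) t\<bar> \<le> ?W * Cs"
          unfolding comp_diff3 comp_F3[OF j] .
      qed
      then have "wnorm \<mu> (diff3 (F3 \<sigma> f \<beta> r G \<Psi>) (F3 \<sigma> f \<beta> r G \<Phi>)) \<le> ?W * Cs" by (rule wnorm_le)
      also have "\<dots> \<le> \<epsilon> / (Cs + 1) * Cs" using W Cs0 by (intro mult_right_mono) auto
      also have "\<dots> < \<epsilon>"
      proof -
        have "\<epsilon> / (Cs + 1) * Cs = \<epsilon> * (Cs / (Cs + 1))" by simp
        also have "\<dots> < \<epsilon> * 1" using \<epsilon> Cs0 by (intro mult_strict_left_mono) auto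
        finally show ?thesis by simp
      qed
      finally show "wnorm \<mu> (diff3 (F3 \<sigma> f \<beta> r G \<Psi>) (F3 \<sigma> f \<beta> r G \<Phi>)) < \<epsilon>" .
    qed
  qed
qed

definition ucomp :: "(nat \<Rightarrow> real \<Rightarrow> real) \<Rightarrow> (real \<Rightarrow> real) \<Rightarrow> bool" where
  "ucomp v g \<longleftrightarrow> (\<forall>i::nat. \<forall>e>0. \<exists>N. \<forall>n\<ge>N. \<forall>t\<in>{-real i..real i}. \<bar>v n t - g t\<bar> < e)"

lemma ucomp_sub:
  assumes "ucomp v g" "strict_mono k"
  shows "ucomp (\<lambda>n. v (k n)) g"
  unfolding ucomp_def
proof (intro allI impI)
  fix i :: nat and e :: real assume e: "e > 0"
  obtain N where N: "\<forall>n\<ge>N. \<forall>t\<in>{-real i..real i}. \<bar>v n t - g t\<bar> < e" using assms(1) e unfolding ucomp_def by blast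
  show "\<exists>N. \<forall>n\<ge>N. \<forall>t\<in>{-real i..real i}. \<bar>v (k n) t - g t\<bar> < e"
  proof (intro exI[of _ N] allI impI)
    fix n assume "n \<ge> N"
    then have "k n \<ge> N" using seq_suble[OF assms(2), of n] by linarith
    then show "\<forall>t\<in>{-real i..real i}. \<bar>v (k n) t - g t\<bar> < e" using N by blast
  qed
qed

lemma ucomp_lim:
  assumes "ucomp v g"
  shows "(\<lambda>n. v n t) \<longlonglongrightarrow> g t"
proof (rule LIMSEQ_I)
  fix e :: real assume e: "e > 0"
  define i where "i = nat \<lceil>\<bar>t\<bar>\<rceil>"
  have ti: "t \<in> {-real i..real i}" unfolding i_def by (auto, linarith+)
  obtain N where "\<forall>n\<ge>N. \<forall>t\<in>{-real i..real i}. \<bar>v n t - g t\<bar> < e" using assms e unfolding ucomp_def by blast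
  then show "\<exists>no. \<forall>n\<ge>no. norm (v n t - g t) < e" using ti by (intro exI[of _ N]) auto
qed

lemma arzela_R:
  fixes u :: "nat \<Rightarrow> real \<Rightarrow> real"
  assumes bnd: "\<And>n t. \<bar>u n t\<bar> \<le> B"
    and equi: "\<And>e. e > 0 \<Longrightarrow> \<exists>d>0. \<forall>n t t'. \<bar>t - t'\<bar> < d \<longrightarrow> \<bar>u n t - u n t'\<bar> \<le> e"
  shows "\<exists>s g. strict_mono s \<and> continuous_on UNIV g \<and> (\<forall>t. \<bar>g t\<bar> \<le> B) \<and> ucomp (\<lambda>n. u (s n)) g"
proof -
  define P where "P i r \<longleftrightarrow> (\<exists>g. \<forall>e>0. \<exists>N. \<forall>n\<ge>N. \<forall>t\<in>{-real i..real i}. \<bar>u (r n) t - g t\<bar> < e)"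
    for i :: nat and r :: "nat \<Rightarrow> nat"
  obtain k where k: "strict_mono (k :: nat \<Rightarrow> nat)" and Pk: "\<And>i. P i (id \<circ> k)"
  proof (rule subsequence_diagonalization_lemma[of P id])
    fix i :: nat and r :: "nat \<Rightarrow> nat"
    obtain g kk where "continuous_on (cbox (-real i) (real i)) g" and kk: "strict_mono (kk :: nat \<Rightarrow> nat)"
      and conv: "\<And>e. 0 < e \<Longrightarrow> \<exists>N. \<forall>n x. n \<ge> N \<and> x \<in> cbox (-real i) (real i) \<longrightarrow> norm (u (r (kk n)) x - g x) < e"
    proof (rule Arzela_Ascoli[of "cbox (-real i) (real i)" "\<lambda>n. u (r n)" B])
      show "compact (cbox (-real i) (real i))" by (rule compact_cbox)
      show "norm (u (r n) x) \<le> B" for n x using bnd by simp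
      fix x :: real and e :: real assume "x \<in> cbox (-real i) (real i)" and e: "0 < e"
      obtain d where d: "d > 0" "\<forall>n t t'. \<bar>t - t'\<bar> < d \<longrightarrow> \<bar>u n t - u n t'\<bar> \<le> e / 2"
        using equi[of "e/2"] e by auto
      show "\<exists>d>0. \<forall>n y. y \<in> cbox (-real i) (real i) \<and> norm (x - y) < d \<longrightarrow> norm (u (r n) x - u (r n) y) < e"
      proof (intro exI[of _ d] conjI allI impI)
        fix n y assume "y \<in> cbox (-real i) (real i) \<and> norm (x - y) < d"
        then have "\<bar>u (r n) x - u (r n) y\<bar> \<le> e / 2" using d by auto
        then show "norm (u (r n) x - u (r n) y) < e" using e by simp
      qed (use d in simp)
    qed blast
    have "P i (r \<circ> kk)" unfolding P_def
    proof (intro exI[of _ g] allI impI)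
      fix e :: real assume "e > 0"
      then obtain N where N: "\<forall>n x. n \<ge> N \<and> x \<in> cbox (-real i) (real i) \<longrightarrow> norm (u (r (kk n)) x - g x) < e"
        using conv by blast
      show "\<exists>N. \<forall>n\<ge>N. \<forall>t\<in>{-real i..real i}. \<bar>u ((r \<circ> kk) n) t - g t\<bar> < e"
        using N by (intro exI[of _ N]) auto
    qed
    then show "\<exists>k. strict_mono k \<and> P i (r \<circ> k)" using kk by blast
  next
    fix i :: nat and r k1 k2 :: "nat \<Rightarrow> nat" and N :: nat
    assume P1: "P i (r \<circ> k1)" and sub: "\<And>j. N \<le> j \<Longrightarrow> \<exists>j'. j \<le> j' \<and> k2 j = k1 j'"
    obtain g where g: "\<forall>e>0. \<exists>N. \<forall>n\<ge>N. \<forall>t\<in>{-real i..real i}. \<bar>u ((r \<circ> k1) n) t - g t\<bar> < e"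
      using P1 unfolding P_def by blast
    show "P i (r \<circ> k2)" unfolding P_def
    proof (intro exI[of _ g] allI impI)
      fix e :: real assume "e > 0"
      then obtain N1 where N1: "\<forall>n\<ge>N1. \<forall>t\<in>{-real i..real i}. \<bar>u ((r \<circ> k1) n) t - g t\<bar> < e" using g by blast
      show "\<exists>M. \<forall>n\<ge>M. \<forall>t\<in>{-real i..real i}. \<bar>u ((r \<circ> k2) n) t - g t\<bar> < e"
      proof (intro exI[of _ "max N N1"] allI impI)
        fix n assume n: "max N N1 \<le> n"
        then obtain j' where "n \<le> j'" "k2 n = k1 j'" using sub[of n] by auto
        then show "\<forall>t\<in>{-real i..real i}. \<bar>u ((r \<circ> k2) n) t - g t\<bar> < e" using N1 n by auto
      qed
    qed
  qed blast
  define g where "g t = lim (\<lambda>n. u (k n) t)" for t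
  have uc: "ucomp (\<lambda>n. u (k n)) g" unfolding ucomp_def
  proof (intro allI impI)
    fix i :: nat and e :: real assume e: "e > 0"
    obtain gi where gi: "\<forall>e>0. \<exists>N. \<forall>n\<ge>N. \<forall>t\<in>{-real i..real i}. \<bar>u (k n) t - gi t\<bar> < e"
      using Pk[of i] unfolding P_def by auto
    have eq: "g t = gi t" if t: "t \<in> {-real i..real i}" for t
    proof -
      have "(\<lambda>n. u (k n) t) \<longlonglongrightarrow> gi t"
      proof (rule LIMSEQ_I)
        fix r :: real assume "r > 0"
        then obtain N where "\<forall>n\<ge>N. \<forall>t\<in>{-real i..real i}. \<bar>u (k n) t - gi t\<bar> < r" using gi by blast
        then show "\<exists>no. \<forall>n\<ge>no. norm (u (k n) t - gi t) < r" using t by (intro exI[of _ N]) auto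
      qed
      then show ?thesis unfolding g_def by (rule limI)
    qed
    obtain N where "\<forall>n\<ge>N. \<forall>t\<in>{-real i..real i}. \<bar>u (k n) t - gi t\<bar> < e" using gi e by blast
    then show "\<exists>N. \<forall>n\<ge>N. \<forall>t\<in>{-real i..real i}. \<bar>u (k n) t - g t\<bar> < e" using eq by auto
  qed
  have lim: "(\<lambda>n. u (k n) t) \<longlonglongrightarrow> g t" for t by (rule ucomp_lim[OF uc])
  have gb: "\<bar>g t\<bar> \<le> B" for t
    by (rule LIMSEQ_le_const2[OF tendsto_rabs[OF lim]]) (use bnd in auto)
  have gc: "continuous_on UNIV g" unfolding continuous_on_iff
  proof (intro ballI allI impI)
    fix x :: real and e :: real assume e: "e > 0"
    obtain d where d: "d > 0" "\<forall>n t t'. \<bar>t - t'\<bar> < d \<longrightarrow> \<bar>u n t - u n t'\<bar> \<le> e / 2"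
      using equi[of "e/2"] e by auto
    show "\<exists>d>0. \<forall>x'\<in>UNIV. dist x' x < d \<longrightarrow> dist (g x') (g x) < e"
    proof (intro exI[of _ d] conjI ballI impI)
      fix x' assume "dist x' x < d"
      then have "\<bar>x' - x\<bar> < d" by (simp add: dist_real_def)
      then have "\<bar>u (k n) x' - u (k n) x\<bar> \<le> e / 2" for n using d by blast
      then have "\<bar>g x' - g x\<bar> \<le> e / 2"
        by (intro LIMSEQ_le_const2[OF tendsto_rabs[OF tendsto_diff[OF lim lim]]]) auto
      then show "dist (g x') (g x) < e" using e by (simp add: dist_real_def)
    qed (use d in simp)
  qed
  show ?thesis using k gc gb uc by blast
qed

lemma wconv:
  fixes v :: "nat \<Rightarrow> tri" and \<Psi> :: tri
  assumes \<mu>: "\<mu> > 0"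
    and b1: "\<And>n j t. j \<in> {1,2,3} \<Longrightarrow> \<bar>comp j (v n) t\<bar> \<le> B"
    and b2: "\<And>j t. j \<in> {1,2,3} \<Longrightarrow> \<bar>comp j \<Psi> t\<bar> \<le> B"
    and uc: "\<And>j. j \<in> {1,2,3} \<Longrightarrow> ucomp (\<lambda>n. comp j (v n)) (comp j \<Psi>)"
  shows "(\<lambda>n. wnorm \<mu> (diff3 (v n) \<Psi>)) \<longlonglongrightarrow> 0"
proof (rule LIMSEQ_I)
  fix \<epsilon> :: real assume \<epsilon>: "\<epsilon> > 0"
  have B0: "B \<ge> 0" using b2[of 1 0] by simp
  have db: "\<bar>comp j (diff3 (v n) \<Psi>) t\<bar> \<le> 2 * B" if "j \<in> {1,2,3}" for j n t
    using b1[OF that, of n t] b2[OF that, of t] unfolding comp_diff3 by linarith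
  have bdd: "bdd_above (range (wt \<mu> (diff3 (v n) \<Psi>)))" for n
  proof (rule bdd_aboveI2)
    fix t show "wt \<mu> (diff3 (v n) \<Psi>) t \<le> 2 * B" using \<mu> by (intro wt_bdd db) auto
  qed
  obtain i :: nat where i: "4 * B / (\<epsilon> * \<mu>) < real i" using reals_Archimedean2 by blast
  have tail: "exp (- \<mu> * real i) * (2 * B) < \<epsilon> / 2"
  proof -
    have "\<mu> * (4 * B / (\<epsilon> * \<mu>)) < \<mu> * real i" using i \<mu> by (intro mult_strict_left_mono) auto
    then have "4 * B / \<epsilon> < \<mu> * real i" using \<mu> by (simp add: field_simps)
    then have "4 * B < \<epsilon> * (\<mu> * real i)" using \<epsilon> by (simp add: field_simps)
    moreover have "\<mu> * real i < exp (\<mu> * real i)"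
      using exp_ge_add_one_self[of "\<mu> * real i"] by linarith
    ultimately have "4 * B < \<epsilon> * exp (\<mu> * real i)" using \<epsilon> by (smt (verit) mult_strict_left_mono)
    then have "2 * B < (\<epsilon> / 2) * exp (\<mu> * real i)" by simp
    then have "exp (- \<mu> * real i) * (2 * B) < exp (- \<mu> * real i) * ((\<epsilon> / 2) * exp (\<mu> * real i))"
      by (intro mult_strict_left_mono) auto
    also have "\<dots> = \<epsilon> / 2" by (simp add: exp_minus field_simps)
    finally show ?thesis .
  qed
  have e2: "\<epsilon> / 2 > 0" using \<epsilon> by simp
  obtain N1 where N1: "\<forall>n\<ge>N1. \<forall>t\<in>{-real i..real i}. \<bar>comp 1 (v n) t - comp 1 \<Psi> t\<bar> < \<epsilon> / 2"
  proof -
    have "ucomp (\<lambda>n. comp 1 (v n)) (comp 1 \<Psi>)" by (rule uc) simp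
    then show ?thesis using e2 that unfolding ucomp_def by blast
  qed
  obtain N2 where N2: "\<forall>n\<ge>N2. \<forall>t\<in>{-real i..real i}. \<bar>comp 2 (v n) t - comp 2 \<Psi> t\<bar> < \<epsilon> / 2"
  proof -
    have "ucomp (\<lambda>n. comp 2 (v n)) (comp 2 \<Psi>)" by (rule uc) simp
    then show ?thesis using e2 that unfolding ucomp_def by blast
  qed
  obtain N3 where N3: "\<forall>n\<ge>N3. \<forall>t\<in>{-real i..real i}. \<bar>comp 3 (v n) t - comp 3 \<Psi> t\<bar> < \<epsilon> / 2"
  proof -
    have "ucomp (\<lambda>n. comp 3 (v n)) (comp 3 \<Psi>)" by (rule uc) simp
    then show ?thesis using e2 that unfolding ucomp_def by blast
  qed
  show "\<exists>no. \<forall>n\<ge>no. norm (wnorm \<mu> (diff3 (v n) \<Psi>) - 0) < \<epsilon>"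
  proof (intro exI[of _ "max N1 (max N2 N3)"] allI impI)
    fix n assume n: "max N1 (max N2 N3) \<le> n"
    have close: "\<bar>comp j (v n) t - comp j \<Psi> t\<bar> < \<epsilon> / 2" if j: "j \<in> {1,2,3}" and t: "t \<in> {-real i..real i}" for j t
    proof -
      consider "j = 1" | "j = 2" | "j = 3" using j by blast
      then show ?thesis using N1 N2 N3 n t by cases auto
    qed
    have "wt \<mu> (diff3 (v n) \<Psi>) t \<le> \<epsilon> / 2" for t
    proof (rule wt_le_from_comps)
      fix j :: nat assume j: "j \<in> {1,2,3}"
      show "exp (- \<mu> * \<bar>t\<bar>) * \<bar>comp j (diff3 (v n) \<Psi>) t\<bar> \<le> \<epsilon> / 2"
      proof (cases "\<bar>t\<bar> \<le> real i")
        case True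
        then have "t \<in> {-real i..real i}" by (simp add: abs_le_iff)
        then have "\<bar>comp j (diff3 (v n) \<Psi>) t\<bar> < \<epsilon> / 2" using close[OF j, of t] unfolding comp_diff3 by simp
        moreover have "exp (- \<mu> * \<bar>t\<bar>) \<le> 1" using \<mu> by simp
        ultimately show ?thesis by (smt (verit) abs_ge_zero mult_left_le_one_le exp_gt_zero)
      next
        case False
        then have "exp (- \<mu> * \<bar>t\<bar>) \<le> exp (- \<mu> * real i)" using \<mu> by simp
        then have "exp (- \<mu> * \<bar>t\<bar>) * \<bar>comp j (diff3 (v n) \<Psi>) t\<bar> \<le> exp (- \<mu> * real i) * (2 * B)"
          using db[OF j] by (intro mult_mono) auto
        then show ?thesis using tail by linarith
      qed
    qed
    then have "wnorm \<mu> (diff3 (v n) \<Psi>) \<le> \<epsilon> / 2" by (rule wnorm_le)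
    moreover have "wnorm \<mu> (diff3 (v n) \<Psi>) \<ge> 0"
      using wt_le_wnorm[OF bdd, of n 0] wt_nonneg[of \<mu> "diff3 (v n) \<Psi>" 0] by linarith
    ultimately show "norm (wnorm \<mu> (diff3 (v n) \<Psi>) - 0) < \<epsilon>" using \<epsilon> by simp
  qed
qed

lemma F_equi:
  assumes GC: "Gcond D c r \<beta> G K \<delta>" and j: "j \<in> {1,2,3}" and s0: "\<sigma> > 0"
    and C1: "C1 \<sigma> k f" and C2: "C2 \<sigma> M f L" and Mpos: "\<forall>i\<in>{1,2,3}. M i \<ge> 0" and b: "\<beta> j > 0"
    and ok: "\<And>n. okT M (P n)" and e: "e > 0"
  shows "\<exists>d>0. \<forall>n t t'. \<bar>t - t'\<bar> < d \<longrightarrow> \<bar>Fop \<sigma> f \<beta> r G j (P n) t - Fop \<sigma> f \<beta> r G j (P n) t'\<bar> \<le> e"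
proof -
  let ?B = "(L j + \<beta> j) * max (M 1) (max (M 2) (M 3))"
  have Lp: "L j > 0" using C2 j by (auto simp: C2_def)
  have "max (M 1) (max (M 2) (M 3)) \<ge> 0" using Mpos by force
  then have B0: "?B \<ge> 0" using Lp b by simp
  obtain \<eta> where \<eta>: "\<eta> > 0" and H: "\<forall>h t t'. continuous_on UNIV h \<and> (\<forall>s. \<bar>h s\<bar> \<le> ?B) \<and> \<bar>t - t'\<bar> < \<eta> \<longrightarrow>
            \<bar>conv (G j) h t - conv (G j) h t'\<bar> \<le> e"
    using conv_equicont[OF Gcond_D(3,4,5,2)[OF GC j] B0 e] by blast
  show ?thesis
  proof (intro exI[of _ \<eta>] conjI allI impI)
    fix n t t' assume "\<bar>t - t'\<bar> < \<eta>"
    moreover have "continuous_on UNIV (H \<sigma> f \<beta> r j (P n))" by (rule H_cont[OF s0 C2 ok j])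
    moreover have "\<forall>s. \<bar>H \<sigma> f \<beta> r j (P n) s\<bar> \<le> ?B"
      using H_bound[where \<beta>=\<beta> and i=j and r=r, OF s0 C1 C2 Mpos ok j b] by blast
    ultimately show "\<bar>Fop \<sigma> f \<beta> r G j (P n) t - Fop \<sigma> f \<beta> r G j (P n) t'\<bar> \<le> e"
      unfolding Fop_def using H by blast
  qed (use \<eta> in simp)
qed

lemma part3:
  fixes \<sigma> c \<mu> :: real
    and D r k M L \<beta> K \<delta> :: "nat \<Rightarrow> real"
    and f :: "nat \<Rightarrow> tri \<Rightarrow> real"
    and G :: "nat \<Rightarrow> real \<Rightarrow> real"
    and up lo :: tri
  assumes s0: "\<sigma> > 0" and cpos: "c > 0"
    and DkM: "\<forall>i\<in>{1,2,3}. D i > 0 \<and> k i > 0 \<and> M i \<ge> k i"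
    and C1: "C1 \<sigma> k f"
    and C2: "C2 \<sigma> M f L"
    and PQM: "PQM \<sigma> M f \<beta>"
    and GC: "Gcond D c r \<beta> G K \<delta>"
    and UL: "upper_lower \<sigma> D c r f up lo"
    and bnd: "\<forall>i\<in>{1,2,3}. \<forall>t. 0 \<le> comp i lo t \<and> comp i lo t \<le> comp i up t \<and> comp i up t \<le> M i"
    and \<mu>0: "0 < \<mu>"
  shows "\<forall>seq :: nat \<Rightarrow> tri. (\<forall>n. seq n \<in> Gamma lo up) \<longrightarrow>
          (\<exists>s \<Psi>. strict_mono s \<and> \<Psi> \<in> Bmu \<mu> \<and>
             (\<lambda>n. wnorm \<mu> (diff3 (F3 \<sigma> f \<beta> r G (seq (s n))) \<Psi>)) \<longlonglongrightarrow> 0)"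
proof (intro allI impI)
  fix seq :: "nat \<Rightarrow> tri" assume sq: "\<forall>n. seq n \<in> Gamma lo up"
  have Mpos: "\<forall>i\<in>{1,2,3}. M i \<ge> 0" using DkM by force
  let ?Mx = "max (M 1) (max (M 2) (M 3))"
  have b1: "\<beta> 1 > 0" and b2: "\<beta> 2 > 0" and b3: "\<beta> 3 > 0" using PQM by (auto simp: PQM_def)
  have i1: "(1::nat) \<in> {1,2,3}" and i2: "(2::nat) \<in> {1,2,3}" and i3: "(3::nat) \<in> {1,2,3}" by auto
  have ok: "okT M (seq n)" for n using Gamma_okT[OF _ bnd] sq by blast
  have FG: "F3 \<sigma> f \<beta> r G (seq n) \<in> Gamma lo up" for n
    using part1[OF s0 cpos DkM C1 C2 PQM GC UL bnd] sq by blast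
  have okF: "okT M (F3 \<sigma> f \<beta> r G (seq n))" for n using Gamma_okT[OF FG bnd] by blast
  have ub: "\<bar>Fop \<sigma> f \<beta> r G j (seq n) t\<bar> \<le> ?Mx" if j: "j \<in> {1,2,3}" for j n t
  proof -
    have "0 \<le> comp j (F3 \<sigma> f \<beta> r G (seq n)) t" "comp j (F3 \<sigma> f \<beta> r G (seq n)) t \<le> M j"
      using okF[of n] j by (auto simp: okT_def)
    moreover have "M j \<le> ?Mx" using j by auto
    ultimately show ?thesis unfolding comp_F3[OF j] by simp
  qed
  note E1 = F_equi[OF GC i1 s0 C1 C2 Mpos b1]
  note E2 = F_equi[OF GC i2 s0 C1 C2 Mpos b2]
  note E3 = F_equi[OF GC i3 s0 C1 C2 Mpos b3]
  obtain s1 g1 where s1: "strict_mono s1" and g1c: "continuous_on UNIV g1" and g1b: "\<forall>t. \<bar>g1 t\<bar> \<le> ?Mx"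
    and u1: "ucomp (\<lambda>n. Fop \<sigma> f \<beta> r G 1 (seq (s1 n))) g1"
  proof -
    have a: "\<And>n t. \<bar>Fop \<sigma> f \<beta> r G 1 (seq n) t\<bar> \<le> ?Mx" using ub[OF i1] .
    have b: "\<And>e. e > 0 \<Longrightarrow> \<exists>d>0. \<forall>n t t'. \<bar>t - t'\<bar> < d \<longrightarrow> \<bar>Fop \<sigma> f \<beta> r G 1 (seq n) t - Fop \<sigma> f \<beta> r G 1 (seq n) t'\<bar> \<le> e"
      by (rule E1[where P=seq, OF ok])
    show ?thesis using arzela_R[OF a b] that by blast
  qed
  obtain s2 g2 where s2: "strict_mono s2" and g2c: "continuous_on UNIV g2" and g2b: "\<forall>t. \<bar>g2 t\<bar> \<le> ?Mx"
    and u2: "ucomp (\<lambda>n. Fop \<sigma> f \<beta> r G 2 (seq (s1 (s2 n)))) g2"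
  proof -
    have a: "\<And>n t. \<bar>Fop \<sigma> f \<beta> r G 2 (seq (s1 n)) t\<bar> \<le> ?Mx" using ub[OF i2] .
    have b: "\<And>e. e > 0 \<Longrightarrow> \<exists>d>0. \<forall>n t t'. \<bar>t - t'\<bar> < d \<longrightarrow> \<bar>Fop \<sigma> f \<beta> r G 2 (seq (s1 n)) t - Fop \<sigma> f \<beta> r G 2 (seq (s1 n)) t'\<bar> \<le> e"
      by (rule E2[where P="\<lambda>n. seq (s1 n)", OF ok])
    show ?thesis using arzela_R[OF a b] that by blast
  qed
  obtain s3 g3 where s3: "strict_mono s3" and g3c: "continuous_on UNIV g3" and g3b: "\<forall>t. \<bar>g3 t\<bar> \<le> ?Mx"
    and u3: "ucomp (\<lambda>n. Fop \<sigma> f \<beta> r G 3 (seq (s1 (s2 (s3 n))))) g3"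
  proof -
    have a: "\<And>n t. \<bar>Fop \<sigma> f \<beta> r G 3 (seq (s1 (s2 n))) t\<bar> \<le> ?Mx" using ub[OF i3] .
    have b: "\<And>e. e > 0 \<Longrightarrow> \<exists>d>0. \<forall>n t t'. \<bar>t - t'\<bar> < d \<longrightarrow> \<bar>Fop \<sigma> f \<beta> r G 3 (seq (s1 (s2 n))) t - Fop \<sigma> f \<beta> r G 3 (seq (s1 (s2 n))) t'\<bar> \<le> e"
      by (rule E3[where P="\<lambda>n. seq (s1 (s2 n))", OF ok])
    show ?thesis using arzela_R[OF a b] that by blast
  qed
  define s where "s n = s1 (s2 (s3 n))" for n
  have s23: "strict_mono (\<lambda>n. s2 (s3 n))" using s2 s3 by (simp add: strict_mono_def)
  have smono: "strict_mono s" using s1 s23 by (simp add: strict_mono_def s_def)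
  have v1: "ucomp (\<lambda>n. Fop \<sigma> f \<beta> r G 1 (seq (s n))) g1"
    using ucomp_sub[OF u1 s23] by (simp add: s_def)
  have v2: "ucomp (\<lambda>n. Fop \<sigma> f \<beta> r G 2 (seq (s n))) g2"
    using ucomp_sub[OF u2 s3] by (simp add: s_def)
  have v3: "ucomp (\<lambda>n. Fop \<sigma> f \<beta> r G 3 (seq (s n))) g3"
    using u3 by (simp add: s_def)
  define \<Psi> where "\<Psi> = (g1, g2, g3)"
  have \<Psi>b: "\<bar>comp j \<Psi> t\<bar> \<le> ?Mx" if "j \<in> {1,2,3}" for j t
    using that g1b g2b g3b by (auto simp: \<Psi>_def comp_def)
  have \<Psi>B: "\<Psi> \<in> Bmu \<mu>"
  proof -
    have "wt \<mu> \<Psi> t \<le> ?Mx" for t using \<mu>0 by (intro wt_bdd \<Psi>b) auto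
    then have "bdd_above (range (wt \<mu> \<Psi>))" by (rule bdd_aboveI2)
    moreover have "\<forall>i\<in>{1,2,3}. continuous_on UNIV (comp i \<Psi>)"
      using g1c g2c g3c by (auto simp: \<Psi>_def comp_def)
    ultimately show ?thesis unfolding Bmu_def wt_def[abs_def] by simp
  qed
  have conv: "(\<lambda>n. wnorm \<mu> (diff3 (F3 \<sigma> f \<beta> r G (seq (s n))) \<Psi>)) \<longlonglongrightarrow> 0"
  proof (rule wconv[OF \<mu>0])
    fix n and j :: nat and t assume j: "j \<in> {1,2,3}"
    show "\<bar>comp j (F3 \<sigma> f \<beta> r G (seq (s n))) t\<bar> \<le> ?Mx" unfolding comp_F3[OF j] by (rule ub[OF j])
  next
    fix j :: nat and t assume j: "j \<in> {1,2,3}"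
    show "\<bar>comp j \<Psi> t\<bar> \<le> ?Mx" by (rule \<Psi>b[OF j])
  next
    fix j :: nat assume j: "j \<in> {1,2,3}"
    consider "j = 1" | "j = 2" | "j = 3" using j by blast
    then show "ucomp (\<lambda>n. comp j (F3 \<sigma> f \<beta> r G (seq (s n)))) (comp j \<Psi>)"
      unfolding comp_F3[OF j] using v1 v2 v3 by cases (simp_all add: \<Psi>_def comp_def)
  qed
  show "\<exists>s \<Psi>. strict_mono s \<and> \<Psi> \<in> Bmu \<mu> \<and> (\<lambda>n. wnorm \<mu> (diff3 (F3 \<sigma> f \<beta> r G (seq (s n))) \<Psi>)) \<longlonglongrightarrow> 0"
    using smono \<Psi>B conv by blast
qed

theorem mainTheorem4:
  fixes \<sigma> c \<mu> :: real
    and D r k M L \<beta> K \<delta> :: "nat \<Rightarrow> real"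
    and f :: "nat \<Rightarrow> tri \<Rightarrow> real"
    and G :: "nat \<Rightarrow> real \<Rightarrow> real"
    and up lo :: tri
  assumes "\<sigma> > 0" and "c > 0"
    and "\<forall>i\<in>{1,2,3}. D i > 0 \<and> k i > 0 \<and> M i \<ge> k i"
    and "C1 \<sigma> k f"
    and "C2 \<sigma> M f L"
    and "PQM \<sigma> M f \<beta>"
    and "Gcond D c r \<beta> G K \<delta>"
    and "upper_lower \<sigma> D c r f up lo"
    and "\<forall>i\<in>{1,2,3}. \<forall>t. 0 \<le> comp i lo t \<and> comp i lo t \<le> comp i up t \<and> comp i up t \<le> M i"
    and "0 < \<mu>" and "\<mu> < min (\<delta> 1) (min (\<delta> 2) (\<delta> 3))"
  shows
    "(\<forall>\<Phi>\<in>Gamma lo up. F3 \<sigma> f \<beta> r G \<Phi> \<in> Gamma lo up \<and>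
       (\<forall>t.
         fst lo t \<le> Fop \<sigma> f \<beta> r G 1 lo t \<and>
         Fop \<sigma> f \<beta> r G 1 lo t \<le> Fop \<sigma> f \<beta> r G 1 \<Phi> t \<and>
         Fop \<sigma> f \<beta> r G 1 \<Phi> t \<le> Fop \<sigma> f \<beta> r G 1 up t \<and>
         Fop \<sigma> f \<beta> r G 1 up t \<le> fst up t \<and>
         fst (snd lo) t \<le> Fop \<sigma> f \<beta> r G 2 (fst up, fst (snd lo), snd (snd up)) t \<and>
         Fop \<sigma> f \<beta> r G 2 (fst up, fst (snd lo), snd (snd up)) t \<le> Fop \<sigma> f \<beta> r G 2 \<Phi> t \<and>
         Fop \<sigma> f \<beta> r G 2 \<Phi> t \<le> Fop \<sigma> f \<beta> r G 2 (fst lo, fst (snd up), snd (snd lo)) t \<and>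
         Fop \<sigma> f \<beta> r G 2 (fst lo, fst (snd up), snd (snd lo)) t \<le> fst (snd up) t \<and>
         snd (snd lo) t \<le> Fop \<sigma> f \<beta> r G 3 lo t \<and>
         Fop \<sigma> f \<beta> r G 3 lo t \<le> Fop \<sigma> f \<beta> r G 3 \<Phi> t \<and>
         Fop \<sigma> f \<beta> r G 3 \<Phi> t \<le> Fop \<sigma> f \<beta> r G 3 up t \<and>
         Fop \<sigma> f \<beta> r G 3 up t \<le> snd (snd up) t))
     \<and> (F3 \<sigma> f \<beta> r G ` Gamma lo up \<subseteq> Bmu \<mu> \<and>
        (\<forall>\<Phi>\<in>Gamma lo up. \<forall>\<epsilon>>0. \<exists>\<eta>>0. \<forall>\<Psi>\<in>Gamma lo up.
           wnorm \<mu> (diff3 \<Psi> \<Phi>) < \<eta> \<longrightarrow>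
           wnorm \<mu> (diff3 (F3 \<sigma> f \<beta> r G \<Psi>) (F3 \<sigma> f \<beta> r G \<Phi>)) < \<epsilon>))
     \<and> (\<forall>seq :: nat \<Rightarrow> tri. (\<forall>n. seq n \<in> Gamma lo up) \<longrightarrow>
          (\<exists>s \<Psi>. strict_mono s \<and> \<Psi> \<in> Bmu \<mu> \<and>
             (\<lambda>n. wnorm \<mu> (diff3 (F3 \<sigma> f \<beta> r G (seq (s n))) \<Psi>)) \<longlonglongrightarrow> 0))"
  using part1[OF assms(1-9)] part2[OF assms(1-11)] part3[OF assms(1-10)] by blast

end
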